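(* Let $\omega$ be an L-obstacle. If $\omega$ has a diagonal $d$, then $\{d\}$ is a minimum skeleton for $\omega$. Otherwise, there is a cross of $\omega$ that is a minimum skeleton for $\omega$.
   Context: An obstacle $\omega$ is a simple polygon in $\mathbb{R}^2$ (a closed, bounded polygonal region without holes whose boundary does not intersect itself), assumed in general position (no three of its vertices are collinear); vertices and edges of $\omega$ are those of its boundary. $\omega$ is rectilinear if each edge is horizontal or vertical, and a rectilinear obstacle is rectilinearly-convex if any two points of $\omega$ can be joined by a shortest rectilinear path (made of horizontal and vertical segments, of minimum $\ell_1$ length) contained in $\omega$. A corner point of a rectilinear path is a point where a horizontal and a vertical segment of the path meet. A set $S$ of closed line segments is inside $\omega$ if the union of its elements is contained in $\omega$. Such an $S$ is a skeleton for $\omega$ if for every pair of points $p,q$ not in the interior of $\omega$ such that every shortest rectilinear path between $p$ and $q$ with at most one corner point meets the interior of $\omega$, each such path intersects some element of $S$; a minimum skeleton is one with the fewest segments. $B(\omega)$ is the smallest closed axis-parallel rectangle containing $\omega$; the extreme edges are the edges of $\omega$ lying on the boundary of $B(\omega)$ (exactly four: left, right, bottom, top); an extreme corner is a vertex of $\omega$ that is a common endpoint of two extreme edges. An L-obstacle is a rectilinearly-convex obstacle with exactly three extreme corners. A diagonal is a line segment contained in $\omega$ joining two diagonally opposite extreme corners. A cross of $\omega$ is a pair $\{s_H,s_V\}$ of line segments contained in $\omega$, where $s_H$ has one endpoint on each of the two horizontal extreme edges and $s_V$ has one endpoint on each of the two vertical extreme edges. *)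

theory Defs
  imports "HOL-Analysis.Analysis"
begin

type_synonym pt = "real \<times> real"

definition nxt :: "pt list \<Rightarrow> nat \<Rightarrow> pt" where
  "nxt vs i = vs ! ((Suc i) mod length vs)"

definition edge_seg :: "pt list \<Rightarrow> nat \<Rightarrow> pt set" where
  "edge_seg vs i = closed_segment (vs ! i) (nxt vs i)"

definition poly_boundary :: "pt list \<Rightarrow> pt set" where
  "poly_boundary vs = (\<Union>i<length vs. edge_seg vs i)"

definition simple_polygon :: "pt list \<Rightarrow> bool" where
  "simple_polygon vs \<longleftrightarrow> length vs \<ge> 3 \<and> distinct vs \<and>
     (\<forall>i<length vs. \<forall>j<length vs. i \<noteq> j \<longrightarrow>
        (if j = Suc i mod length vs then edge_seg vs i \<inter> edge_seg vs j = {vs ! j}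
         else if i = Suc j mod length vs then edge_seg vs i \<inter> edge_seg vs j = {vs ! i}
         else edge_seg vs i \<inter> edge_seg vs j = {}))"

definition general_position :: "pt list \<Rightarrow> bool" where
  "general_position vs \<longleftrightarrow>
     (\<forall>a\<in>set vs. \<forall>b\<in>set vs. \<forall>c\<in>set vs.
        a \<noteq> b \<and> b \<noteq> c \<and> a \<noteq> c \<longrightarrow> \<not> collinear {a, b, c})"

definition region :: "pt list \<Rightarrow> pt set" where
  "region vs = poly_boundary vs \<union> inside (poly_boundary vs)"

definition obstacle :: "pt list \<Rightarrow> bool" where
  "obstacle vs \<longleftrightarrow> simple_polygon vs \<and> general_position vs"

definition rectilinear :: "pt list \<Rightarrow> bool" where
  "rectilinear vs \<longleftrightarrow>
     (\<forall>i<length vs. fst (vs ! i) = fst (nxt vs i) \<or> snd (vs ! i) = snd (nxt vs i))"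

definition rpath :: "pt list \<Rightarrow> bool" where
  "rpath ps \<longleftrightarrow> ps \<noteq> [] \<and>
     (\<forall>i. Suc i < length ps \<longrightarrow>
        fst (ps ! i) = fst (ps ! Suc i) \<or> snd (ps ! i) = snd (ps ! Suc i))"

definition rseg :: "pt list \<Rightarrow> nat \<Rightarrow> pt set" where
  "rseg ps i = closed_segment (ps ! i) (ps ! Suc i)"

definition rpath_set :: "pt list \<Rightarrow> pt set" where
  "rpath_set ps = set ps \<union> (\<Union>i\<in>{i. Suc i < length ps}. rseg ps i)"

definition l1dist :: "pt \<Rightarrow> pt \<Rightarrow> real" where
  "l1dist p q = \<bar>fst p - fst q\<bar> + \<bar>snd p - snd q\<bar>"

definition rlength :: "pt list \<Rightarrow> real" where
  "rlength ps = (\<Sum>i\<in>{i. Suc i < length ps}. l1dist (ps ! i) (ps ! Suc i))"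

definition rpath_between :: "pt \<Rightarrow> pt \<Rightarrow> pt list \<Rightarrow> bool" where
  "rpath_between p q ps \<longleftrightarrow> rpath ps \<and> hd ps = p \<and> last ps = q"

definition shortest_rpath :: "pt \<Rightarrow> pt \<Rightarrow> pt list \<Rightarrow> bool" where
  "shortest_rpath p q ps \<longleftrightarrow> rpath_between p q ps \<and>
     (\<forall>ps'. rpath_between p q ps' \<longrightarrow> rlength ps \<le> rlength ps')"

definition horiz_seg :: "pt list \<Rightarrow> nat \<Rightarrow> bool" where
  "horiz_seg ps i \<longleftrightarrow> Suc i < length ps \<and> snd (ps ! i) = snd (ps ! Suc i) \<and> fst (ps ! i) \<noteq> fst (ps ! Suc i)"

definition vert_seg :: "pt list \<Rightarrow> nat \<Rightarrow> bool" where
  "vert_seg ps i \<longleftrightarrow> Suc i < length ps \<and> fst (ps ! i) = fst (ps ! Suc i) \<and> snd (ps ! i) \<noteq> snd (ps ! Suc i)"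

definition corner_points :: "pt list \<Rightarrow> pt set" where
  "corner_points ps = {x. \<exists>i j. horiz_seg ps i \<and> vert_seg ps j \<and> x \<in> rseg ps i \<and> x \<in> rseg ps j}"

definition at_most_one_corner :: "pt list \<Rightarrow> bool" where
  "at_most_one_corner ps \<longleftrightarrow> (\<forall>x\<in>corner_points ps. \<forall>y\<in>corner_points ps. x = y)"

definition rect_convex :: "pt set \<Rightarrow> bool" where
  "rect_convex \<omega> \<longleftrightarrow>
     (\<forall>p\<in>\<omega>. \<forall>q\<in>\<omega>. \<exists>ps. shortest_rpath p q ps \<and> rpath_set ps \<subseteq> \<omega>)"

definition is_segment :: "pt set \<Rightarrow> bool" where
  "is_segment s \<longleftrightarrow> (\<exists>a b. a \<noteq> b \<and> s = closed_segment a b)"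

definition skeleton :: "pt set \<Rightarrow> pt set set \<Rightarrow> bool" where
  "skeleton \<omega> S \<longleftrightarrow> (\<forall>s\<in>S. is_segment s) \<and> \<Union>S \<subseteq> \<omega> \<and>
     (\<forall>p q. p \<notin> interior \<omega> \<and> q \<notin> interior \<omega> \<and>
        (\<forall>ps. shortest_rpath p q ps \<and> at_most_one_corner ps \<longrightarrow>
              rpath_set ps \<inter> interior \<omega> \<noteq> {}) \<longrightarrow>
        (\<forall>ps. shortest_rpath p q ps \<and> at_most_one_corner ps \<longrightarrow>
              (\<exists>s\<in>S. rpath_set ps \<inter> s \<noteq> {})))"

definition min_skeleton :: "pt set \<Rightarrow> pt set set \<Rightarrow> bool" where
  "min_skeleton \<omega> S \<longleftrightarrow> finite S \<and> skeleton \<omega> S \<and>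
     (\<forall>S'. finite S' \<and> skeleton \<omega> S' \<longrightarrow> card S \<le> card S')"

definition bbox :: "pt set \<Rightarrow> pt set" where
  "bbox \<omega> = cbox (Inf (fst ` \<omega>), Inf (snd ` \<omega>)) (Sup (fst ` \<omega>), Sup (snd ` \<omega>))"

definition extreme_edge :: "pt list \<Rightarrow> nat \<Rightarrow> bool" where
  "extreme_edge vs i \<longleftrightarrow> i < length vs \<and> edge_seg vs i \<subseteq> frontier (bbox (region vs))"

definition extreme_corner :: "pt list \<Rightarrow> pt \<Rightarrow> bool" where
  "extreme_corner vs v \<longleftrightarrow> v \<in> set vs \<and>
     (\<exists>i j. i \<noteq> j \<and> extreme_edge vs i \<and> extreme_edge vs j \<and>
            v \<in> {vs ! i, nxt vs i} \<and> v \<in> {vs ! j, nxt vs j})"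

definition L_obstacle :: "pt list \<Rightarrow> bool" where
  "L_obstacle vs \<longleftrightarrow> obstacle vs \<and> rectilinear vs \<and> rect_convex (region vs) \<and>
     card {v. extreme_corner vs v} = 3"

text \<open>Extreme corners are corners of the bounding box, so two of them are diagonally
  opposite iff they differ in both coordinates.\<close>
definition diagonal :: "pt list \<Rightarrow> pt set \<Rightarrow> bool" where
  "diagonal vs d \<longleftrightarrow> (\<exists>a b. extreme_corner vs a \<and> extreme_corner vs b \<and>
      fst a \<noteq> fst b \<and> snd a \<noteq> snd b \<and>
      d = closed_segment a b \<and> d \<subseteq> region vs)"

definition horiz_edge :: "pt list \<Rightarrow> nat \<Rightarrow> bool" where
  "horiz_edge vs i \<longleftrightarrow> snd (vs ! i) = snd (nxt vs i)"

definition vert_edge :: "pt list \<Rightarrow> nat \<Rightarrow> bool" where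
  "vert_edge vs i \<longleftrightarrow> fst (vs ! i) = fst (nxt vs i)"

definition cross :: "pt list \<Rightarrow> pt set set \<Rightarrow> bool" where
  "cross vs S \<longleftrightarrow> (\<exists>sH sV. S = {sH, sV} \<and> is_segment sH \<and> is_segment sV \<and>
      sH \<subseteq> region vs \<and> sV \<subseteq> region vs \<and>
      (\<exists>i j a b. i \<noteq> j \<and> extreme_edge vs i \<and> extreme_edge vs j \<and>
          horiz_edge vs i \<and> horiz_edge vs j \<and>
          a \<in> edge_seg vs i \<and> b \<in> edge_seg vs j \<and> sH = closed_segment a b) \<and>
      (\<exists>i j a b. i \<noteq> j \<and> extreme_edge vs i \<and> extreme_edge vs j \<and>
          vert_edge vs i \<and> vert_edge vs j \<and>
          a \<in> edge_seg vs i \<and> b \<in> edge_seg vs j \<and> sV = closed_segment a b))"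

end

theory Submission
  imports Defs
begin


lemma seg_mem: "z \<in> closed_segment a b \<longleftrightarrow> (\<exists>u. 0 \<le> u \<and> u \<le> 1 \<and> fst z = (1-u) * fst a + u * fst b \<and> snd z = (1-u) * snd a + u * snd b)"
  for z a b :: pt
  unfolding closed_segment_def by (auto simp: prod_eq_iff)

lemma mem_cbox2: "(z::pt) \<in> cbox (a,b) (c,d) \<longleftrightarrow> a \<le> fst z \<and> fst z \<le> c \<and> b \<le> snd z \<and> snd z \<le> d"
  by (cases z) (simp add: cbox_Pair_eq)

lemma mem_box2: "(z::pt) \<in> box (a,b) (c,d) \<longleftrightarrow> a < fst z \<and> fst z < c \<and> b < snd z \<and> snd z < d"
  by (cases z) (auto simp: mem_box Basis_prod_def)

lemma between_conv: "0 \<le> u \<Longrightarrow> u \<le> 1 \<Longrightarrow> min a b \<le> (1-u)*a + u*b \<and> (1-u)*a + u*b \<le> max a b" for a b u :: real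
proof -
  assume u: "0 \<le> u" "u \<le> 1"
  show ?thesis
  proof (cases "a \<le> b")
    case True
    have "0 \<le> u*(b-a)" "0 \<le> (1-u)*(b-a)" using u True by simp_all
    then show ?thesis using True by (simp add: algebra_simps min_def max_def)
  next
    case False
    have "0 \<le> u*(a-b)" "0 \<le> (1-u)*(a-b)" using u False by simp_all
    then show ?thesis using False by (simp add: algebra_simps min_def max_def)
  qed
qed

lemma seg_coords: "z \<in> closed_segment a b \<Longrightarrow>
   min (fst a) (fst b) \<le> fst z \<and> fst z \<le> max (fst a) (fst b) \<and>
   min (snd a) (snd b) \<le> snd z \<and> snd z \<le> max (snd a) (snd b)" for z a b :: pt
  unfolding seg_mem using between_conv by metis

lemma ex_param: "min a b \<le> t \<Longrightarrow> t \<le> max a b \<Longrightarrow> \<exists>u. 0 \<le> u \<and> u \<le> 1 \<and> t = (1-u)*a + u*b" for a b t :: real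
proof (cases "a = b")
  case True
  assume "min a b \<le> t" "t \<le> max a b"
  then show ?thesis using True by (intro exI[of _ 0]) auto
next
  case False
  assume h: "min a b \<le> t" "t \<le> max a b"
  define u where "u = (t - a)/(b - a)"
  have "u*(b-a) = t - a" using False unfolding u_def by simp
  then have "t = (1-u)*a + u*b" by algebra
  moreover have "0 \<le> u \<and> u \<le> 1" using False h unfolding u_def
    by (cases "a < b") (auto simp: divide_simps min_def max_def split: if_splits)
  ultimately show ?thesis by blast
qed

lemma seg_h: "snd a = snd b \<Longrightarrow> z \<in> closed_segment a b \<longleftrightarrow>
   snd z = snd a \<and> min (fst a) (fst b) \<le> fst z \<and> fst z \<le> max (fst a) (fst b)" for z a b :: pt
proof
  assume "snd a = snd b" "z \<in> closed_segment a b"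
  then show "snd z = snd a \<and> min (fst a) (fst b) \<le> fst z \<and> fst z \<le> max (fst a) (fst b)"
    using seg_coords[of z a b] by auto
next
  assume h: "snd a = snd b" "snd z = snd a \<and> min (fst a) (fst b) \<le> fst z \<and> fst z \<le> max (fst a) (fst b)"
  then obtain u where "0 \<le> u" "u \<le> 1" "fst z = (1-u) * fst a + u * fst b" using ex_param by blast
  moreover have "snd z = (1-u) * snd a + u * snd b" using h by (simp add: algebra_simps)
  ultimately show "z \<in> closed_segment a b" unfolding seg_mem by blast
qed

lemma seg_v: "fst a = fst b \<Longrightarrow> z \<in> closed_segment a b \<longleftrightarrow>
   fst z = fst a \<and> min (snd a) (snd b) \<le> snd z \<and> snd z \<le> max (snd a) (snd b)" for z a b :: pt
proof
  assume "fst a = fst b" "z \<in> closed_segment a b"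
  then show "fst z = fst a \<and> min (snd a) (snd b) \<le> snd z \<and> snd z \<le> max (snd a) (snd b)"
    using seg_coords[of z a b] by auto
next
  assume h: "fst a = fst b" "fst z = fst a \<and> min (snd a) (snd b) \<le> snd z \<and> snd z \<le> max (snd a) (snd b)"
  then obtain u where "0 \<le> u" "u \<le> 1" "snd z = (1-u) * snd a + u * snd b" using ex_param by blast
  moreover have "fst z = (1-u) * fst a + u * fst b" using h by (simp add: algebra_simps)
  ultimately show "z \<in> closed_segment a b" unfolding seg_mem by blast
qed


definition Lset :: "pt \<Rightarrow> pt \<Rightarrow> pt \<Rightarrow> pt set" where
  "Lset p c q = closed_segment p c \<union> closed_segment c q"

lemma idx_set: "{i. Suc i < length ps} = {..<length ps - 1}" by auto

lemma rlength_alt: "rlength ps = (\<Sum>i<length ps - 1. \<bar>fst (ps!Suc i) - fst (ps!i)\<bar> + \<bar>snd (ps!Suc i) - snd (ps!i)\<bar>)"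
  unfolding rlength_def idx_set l1dist_def by (simp add: abs_minus_commute)

lemma sum_split_abs: "(\<Sum>i<n. \<bar>f i\<bar> + \<bar>g i\<bar>) = (\<Sum>i<n. \<bar>f i\<bar>) + (\<Sum>i<n. \<bar>g i\<bar>)" for f g :: "nat \<Rightarrow> real"
  by (simp add: sum.distrib)

lemma tele_fst: "ps \<noteq> [] \<Longrightarrow> fst (last ps) - fst (hd ps) = (\<Sum>i<length ps - 1. fst (ps!Suc i) - fst (ps!i))"
  for ps :: "pt list"
  by (simp add: hd_conv_nth last_conv_nth sum_lessThan_telescope[where f="\<lambda>i. fst (ps!i)"])

lemma tele_snd: "ps \<noteq> [] \<Longrightarrow> snd (last ps) - snd (hd ps) = (\<Sum>i<length ps - 1. snd (ps!Suc i) - snd (ps!i))"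
  for ps :: "pt list"
  by (simp add: hd_conv_nth last_conv_nth sum_lessThan_telescope[where f="\<lambda>i. snd (ps!i)"])

lemma rlength_lower: "ps \<noteq> [] \<Longrightarrow> l1dist (hd ps) (last ps) \<le> rlength ps"
proof -
  assume ne: "ps \<noteq> []"
  have "l1dist (hd ps) (last ps) = \<bar>fst (last ps) - fst (hd ps)\<bar> + \<bar>snd (last ps) - snd (hd ps)\<bar>"
    unfolding l1dist_def by (simp add: abs_minus_commute)
  also have "\<dots> \<le> (\<Sum>i<length ps - 1. \<bar>fst (ps!Suc i) - fst (ps!i)\<bar>) + (\<Sum>i<length ps - 1. \<bar>snd (ps!Suc i) - snd (ps!i)\<bar>)"
    unfolding tele_fst[OF ne] tele_snd[OF ne] by (intro add_mono sum_abs)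
  also have "\<dots> = rlength ps" unfolding rlength_alt sum_split_abs ..
  finally show ?thesis .
qed

lemma canon:
  assumes c: "c = (fst q, snd p) \<or> c = (fst p, snd q)"
  shows "shortest_rpath p q [p,c,q]" "at_most_one_corner [p,c,q]" "rpath_set [p,c,q] = Lset p c q"
proof -
  have rp: "rpath [p,c,q]" unfolding rpath_def using c
    by (auto simp: less_Suc_eq nth_Cons split: nat.splits)
  have "rlength [p,c,q] = l1dist p c + l1dist c q"
    unfolding rlength_def idx_set by (simp add: numeral_3_eq_3 lessThan_Suc)
  also have "\<dots> = l1dist p q" using c unfolding l1dist_def by auto
  finally have len: "rlength [p,c,q] = l1dist p q" .
  show "shortest_rpath p q [p,c,q]" unfolding shortest_rpath_def rpath_between_def
    using rp len rlength_lower by (fastforce simp: rpath_def rpath_between_def)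
  have ix: "{i. Suc i < length [p,c,q]} = {0,1}" by auto
  show rs: "rpath_set [p,c,q] = Lset p c q"
    unfolding rpath_set_def ix Lset_def rseg_def by auto
  have inter: "x \<in> closed_segment p c \<Longrightarrow> x \<in> closed_segment c q \<Longrightarrow> x = c" for x
  proof -
    assume a: "x \<in> closed_segment p c" "x \<in> closed_segment c q"
    show "x = c" using c
    proof
      assume cc: "c = (fst q, snd p)"
      have "snd x = snd c" using a(1) cc seg_h[of p c x] by auto
      moreover have "fst x = fst c" using a(2) cc seg_v[of c q x] by auto
      ultimately show ?thesis by (simp add: prod_eq_iff)
    next
      assume cc: "c = (fst p, snd q)"
      have "fst x = fst c" using a(1) cc seg_v[of p c x] by auto
      moreover have "snd x = snd c" using a(2) cc seg_h[of c q x] by auto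
      ultimately show ?thesis by (simp add: prod_eq_iff)
    qed
  qed
  have "x \<in> corner_points [p,c,q] \<Longrightarrow> x = c" for x
  proof -
    assume "x \<in> corner_points [p,c,q]"
    then obtain i j where ij: "horiz_seg [p,c,q] i" "vert_seg [p,c,q] j" "x \<in> rseg [p,c,q] i" "x \<in> rseg [p,c,q] j"
      unfolding corner_points_def by blast
    have "i < 2" "j < 2" using ij(1,2) unfolding horiz_seg_def vert_seg_def by auto
    moreover have "i \<noteq> j" using ij(1,2) unfolding horiz_seg_def vert_seg_def by auto
    ultimately have "(i = 0 \<and> j = 1) \<or> (i = 1 \<and> j = 0)" by auto
    then show "x = c" using ij(3,4) inter[of x] unfolding rseg_def
      by auto
  qed
  then show "at_most_one_corner [p,c,q]" unfolding at_most_one_corner_def by blast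
qed

lemma shortest_len: "shortest_rpath p q ps \<Longrightarrow> rlength ps = l1dist p q"
proof -
  assume s: "shortest_rpath p q ps"
  have "rlength ps \<le> rlength [p,(fst q, snd p),q]"
    using s canon(1)[of "(fst q, snd p)" q p] unfolding shortest_rpath_def by auto
  also have "\<dots> = l1dist p q" unfolding rlength_def idx_set l1dist_def
    by (simp add: numeral_3_eq_3 lessThan_Suc)
  finally show ?thesis using rlength_lower[of ps] s
    unfolding shortest_rpath_def rpath_between_def rpath_def by auto
qed

lemma sign_lemma:
  fixes f :: "nat \<Rightarrow> real"
  assumes "(\<Sum>i<n. \<bar>f i\<bar>) = \<bar>\<Sum>i<n. f i\<bar>"
  shows "(\<forall>i<n. 0 \<le> f i) \<or> (\<forall>i<n. f i \<le> 0)"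
proof (cases "0 \<le> (\<Sum>i<n. f i)")
  case True
  then have "(\<Sum>i<n. \<bar>f i\<bar> - f i) = 0" using assms by (simp add: sum_subtractf)
  then have "\<forall>i\<in>{..<n}. \<bar>f i\<bar> - f i = 0" by (subst (asm) sum_nonneg_eq_0_iff) auto
  then have "\<forall>i<n. 0 \<le> f i" by (metis abs_ge_zero eq_iff_diff_eq_0 lessThan_iff)
  then show ?thesis by blast
next
  case False
  then have "(\<Sum>i<n. \<bar>f i\<bar> + f i) = 0" using assms by (simp add: sum.distrib)
  then have "\<forall>i\<in>{..<n}. \<bar>f i\<bar> + f i = 0" by (subst (asm) sum_nonneg_eq_0_iff) auto
  then have "\<forall>i<n. f i \<le> 0" by (metis abs_ge_zero add.commute add.right_neutral add_le_same_cancel1 lessThan_iff)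
  then show ?thesis by blast
qed

lemma mono_signs:
  assumes s: "shortest_rpath p q ps"
  shows "(\<forall>i<length ps - 1. 0 \<le> fst (ps!Suc i) - fst (ps!i)) \<or> (\<forall>i<length ps - 1. fst (ps!Suc i) - fst (ps!i) \<le> 0)"
    "(\<forall>i<length ps - 1. 0 \<le> snd (ps!Suc i) - snd (ps!i)) \<or> (\<forall>i<length ps - 1. snd (ps!Suc i) - snd (ps!i) \<le> 0)"
proof -
  have ne: "ps \<noteq> []" and hl: "hd ps = p" "last ps = q" using s unfolding shortest_rpath_def rpath_between_def rpath_def by auto
  define n where "n = length ps - 1"
  define A where "A = (\<Sum>i<n. \<bar>fst (ps!Suc i) - fst (ps!i)\<bar>)"
  define B where "B = (\<Sum>i<n. \<bar>snd (ps!Suc i) - snd (ps!i)\<bar>)"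
  define A' where "A' = \<bar>\<Sum>i<n. fst (ps!Suc i) - fst (ps!i)\<bar>"
  define B' where "B' = \<bar>\<Sum>i<n. snd (ps!Suc i) - snd (ps!i)\<bar>"
  have "A + B = A' + B'"
  proof -
    have "A + B = rlength ps" unfolding A_def B_def rlength_alt sum_split_abs n_def ..
    also have "\<dots> = l1dist p q" using shortest_len[OF s] .
    also have "\<dots> = A' + B'" unfolding A'_def B'_def n_def tele_fst[OF ne, symmetric] tele_snd[OF ne, symmetric] hl l1dist_def
      by (simp add: abs_minus_commute)
    finally show ?thesis .
  qed
  moreover have "A' \<le> A" "B' \<le> B" unfolding A_def A'_def B_def B'_def by (rule sum_abs)+
  ultimately have "A = A'" "B = B'" by linarith+
  then show "(\<forall>i<length ps - 1. 0 \<le> fst (ps!Suc i) - fst (ps!i)) \<or> (\<forall>i<length ps - 1. fst (ps!Suc i) - fst (ps!i) \<le> 0)"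
    "(\<forall>i<length ps - 1. 0 \<le> snd (ps!Suc i) - snd (ps!i)) \<or> (\<forall>i<length ps - 1. snd (ps!Suc i) - snd (ps!i) \<le> 0)"
    unfolding A_def A'_def B_def B'_def n_def by (auto dest: sign_lemma)
qed


lemma not_hv_eq: "rpath ps \<Longrightarrow> Suc i < length ps \<Longrightarrow> \<not> horiz_seg ps i \<Longrightarrow> \<not> vert_seg ps i \<Longrightarrow> ps!i = ps!Suc i"
  unfolding rpath_def horiz_seg_def vert_seg_def by (auto simp: prod_eq_iff)

lemma not_v_snd: "rpath ps \<Longrightarrow> Suc i < length ps \<Longrightarrow> \<not> vert_seg ps i \<Longrightarrow> snd (ps!i) = snd (ps!Suc i)"
  unfolding rpath_def horiz_seg_def vert_seg_def by auto

lemma not_h_fst: "rpath ps \<Longrightarrow> Suc i < length ps \<Longrightarrow> \<not> horiz_seg ps i \<Longrightarrow> fst (ps!i) = fst (ps!Suc i)"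
  unfolding rpath_def horiz_seg_def vert_seg_def by auto

lemma run_eq: "(\<forall>i. h < i \<and> i < v \<longrightarrow> ps!i = ps!Suc i) \<Longrightarrow> h < v \<Longrightarrow> ps!Suc h = ps!v"
proof (induction v)
  case 0 then show ?case by simp
next
  case (Suc v)
  show ?case
  proof (cases "h = v")
    case True then show ?thesis by simp
  next
    case False
    then have "h < v" using Suc.prems by simp
    then have "ps!Suc h = ps!v" using Suc by auto
    also have "\<dots> = ps!Suc v" using Suc.prems \<open>h < v\<close> by auto
    finally show ?thesis .
  qed
qed

lemma corner_HV:
  assumes rp: "rpath ps" and ha: "horiz_seg ps a" and vb: "vert_seg ps b" and ab: "a < b"
  shows "\<exists>v. a < v \<and> v \<le> b \<and> vert_seg ps v \<and> ps!v \<in> corner_points ps"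
proof -
  define S where "S = {i. a \<le> i \<and> i < b \<and> horiz_seg ps i}"
  have fS: "finite S" "a \<in> S" unfolding S_def using ha ab by auto
  define h where "h = Max S"
  have hS: "h \<in> S" using fS unfolding h_def by (intro Max_in) auto
  have hmax: "\<And>i. i \<in> S \<Longrightarrow> i \<le> h" using fS unfolding h_def by auto
  define T where "T = {i. h < i \<and> i \<le> b \<and> vert_seg ps i}"
  have fT: "finite T" "b \<in> T" unfolding T_def using hS vb unfolding S_def by auto
  define v where "v = Min T"
  have vT: "v \<in> T" using fT unfolding v_def by (intro Min_in) auto
  have vmin: "\<And>i. i \<in> T \<Longrightarrow> v \<le> i" using fT unfolding v_def by auto
  have lenb: "Suc b < length ps" using vb unfolding vert_seg_def by auto
  have run: "\<forall>i. h < i \<and> i < v \<longrightarrow> ps!i = ps!Suc i"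
  proof (intro allI impI)
    fix i assume i: "h < i \<and> i < v"
    have "i \<le> b" "v \<le> b" using i vT unfolding T_def by auto
    have "\<not> horiz_seg ps i"
    proof
      assume "horiz_seg ps i"
      then have "i \<in> S" unfolding S_def using i hS \<open>v \<le> b\<close> unfolding S_def by auto
      then show False using hmax i by fastforce
    qed
    moreover have "\<not> vert_seg ps i"
    proof
      assume "vert_seg ps i"
      then have "i \<in> T" unfolding T_def using i \<open>v \<le> b\<close> by auto
      then show False using vmin i by fastforce
    qed
    ultimately show "ps!i = ps!Suc i" using not_hv_eq[OF rp] lenb i \<open>v \<le> b\<close> by auto
  qed
  have hv: "h < v" using vT unfolding T_def by auto
  have eq: "ps!Suc h = ps!v" using run_eq[OF run hv] .
  have "ps!v \<in> rseg ps h" unfolding rseg_def eq[symmetric] by simp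
  moreover have "ps!v \<in> rseg ps v" unfolding rseg_def by simp
  moreover have "horiz_seg ps h" using hS unfolding S_def by auto
  moreover have "vert_seg ps v" using vT unfolding T_def by auto
  ultimately have "ps!v \<in> corner_points ps" unfolding corner_points_def by blast
  moreover have "a < v" using hS hv unfolding S_def by auto
  ultimately show ?thesis using vT unfolding T_def by auto
qed

lemma corner_VH:
  assumes rp: "rpath ps" and ha: "vert_seg ps a" and vb: "horiz_seg ps b" and ab: "a < b"
  shows "\<exists>v. a < v \<and> v \<le> b \<and> horiz_seg ps v \<and> ps!v \<in> corner_points ps"
proof -
  define S where "S = {i. a \<le> i \<and> i < b \<and> vert_seg ps i}"
  have fS: "finite S" "a \<in> S" unfolding S_def using ha ab by auto
  define h where "h = Max S"
  have hS: "h \<in> S" using fS unfolding h_def by (intro Max_in) auto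
  have hmax: "\<And>i. i \<in> S \<Longrightarrow> i \<le> h" using fS unfolding h_def by auto
  define T where "T = {i. h < i \<and> i \<le> b \<and> horiz_seg ps i}"
  have fT: "finite T" "b \<in> T" unfolding T_def using hS vb unfolding S_def by auto
  define v where "v = Min T"
  have vT: "v \<in> T" using fT unfolding v_def by (intro Min_in) auto
  have vmin: "\<And>i. i \<in> T \<Longrightarrow> v \<le> i" using fT unfolding v_def by auto
  have lenb: "Suc b < length ps" using vb unfolding horiz_seg_def by auto
  have run: "\<forall>i. h < i \<and> i < v \<longrightarrow> ps!i = ps!Suc i"
  proof (intro allI impI)
    fix i assume i: "h < i \<and> i < v"
    have "i \<le> b" "v \<le> b" using i vT unfolding T_def by auto
    have "\<not> vert_seg ps i"
    proof
      assume "vert_seg ps i"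
      then have "i \<in> S" unfolding S_def using i hS \<open>v \<le> b\<close> unfolding S_def by auto
      then show False using hmax i by fastforce
    qed
    moreover have "\<not> horiz_seg ps i"
    proof
      assume "horiz_seg ps i"
      then have "i \<in> T" unfolding T_def using i \<open>v \<le> b\<close> by auto
      then show False using vmin i by fastforce
    qed
    ultimately show "ps!i = ps!Suc i" using not_hv_eq[OF rp] lenb i \<open>v \<le> b\<close> by auto
  qed
  have hv: "h < v" using vT unfolding T_def by auto
  have eq: "ps!Suc h = ps!v" using run_eq[OF run hv] .
  have "ps!v \<in> rseg ps h" unfolding rseg_def eq[symmetric] by simp
  moreover have "ps!v \<in> rseg ps v" unfolding rseg_def by simp
  moreover have "vert_seg ps h" using hS unfolding S_def by auto
  moreover have "horiz_seg ps v" using vT unfolding T_def by auto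
  ultimately have "ps!v \<in> corner_points ps" unfolding corner_points_def by blast
  moreover have "a < v" using hS hv unfolding S_def by auto
  ultimately show ?thesis using vT unfolding T_def by auto
qed

lemma sum_sign_nz:
  fixes g :: "nat \<Rightarrow> real"
  assumes "(\<forall>i<n. 0 \<le> g i) \<or> (\<forall>i<n. g i \<le> 0)" "v < h" "h \<le> n" "g v \<noteq> 0"
  shows "(\<Sum>i=v..<h. g i) \<noteq> 0"
  using assms(1)
proof
  assume a: "\<forall>i<n. 0 \<le> g i"
  have "g v \<le> (\<Sum>i=v..<h. g i)" using a assms(2,3) by (intro member_le_sum) auto
  moreover have "0 \<le> g v" using a assms(2,3) by auto
  ultimately show ?thesis using assms(4) by linarith
next
  assume a: "\<forall>i<n. g i \<le> 0"
  have "(\<Sum>i=v..<h. g i) = g v + (\<Sum>i\<in>{v..<h} - {v}. g i)" using assms(2)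
    by (subst sum.remove[of _ v]) auto
  moreover have "(\<Sum>i\<in>{v..<h} - {v}. g i) \<le> 0" using a assms(2,3) by (intro sum_nonpos) auto
  ultimately have "(\<Sum>i=v..<h. g i) \<le> g v" by linarith
  moreover have "g v \<le> 0" using a assms(2,3) by auto
  ultimately show ?thesis using assms(4) by linarith
qed


lemma shortest_rp: "shortest_rpath p q ps \<Longrightarrow> rpath ps \<and> hd ps = p \<and> last ps = q"
  unfolding shortest_rpath_def rpath_between_def by auto

lemma no_HVH:
  assumes s: "shortest_rpath p q ps" and c1: "at_most_one_corner ps"
    and h1: "horiz_seg ps a" and v1: "vert_seg ps b" and h2: "horiz_seg ps c" and "a < b" "b < c"
  shows False
proof -
  have rp: "rpath ps" using shortest_rp[OF s] by auto
  obtain v where v: "a < v" "v \<le> b" "vert_seg ps v" "ps!v \<in> corner_points ps"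
    using corner_HV[OF rp h1 v1 \<open>a < b\<close>] by blast
  obtain h where h: "v < h" "h \<le> c" "horiz_seg ps h" "ps!h \<in> corner_points ps"
    using corner_VH[OF rp v(3) h2] v(2) \<open>b < c\<close> by auto
  have eq: "ps!v = ps!h" using c1 v(4) h(4) unfolding at_most_one_corner_def by blast
  have "snd (ps!h) - snd (ps!v) = (\<Sum>i=v..<h. snd (ps!Suc i) - snd (ps!i))"
    using sum_Suc_diff'[of v h "\<lambda>i. snd (ps!i)"] h(1) by simp
  moreover have "(\<Sum>i=v..<h. snd (ps!Suc i) - snd (ps!i)) \<noteq> 0"
    using mono_signs(2)[OF s] h(1,3) v(3) unfolding horiz_seg_def vert_seg_def
    by (intro sum_sign_nz[where n="length ps - 1"]) auto
  ultimately show False using eq by simp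
qed

lemma no_VHV:
  assumes s: "shortest_rpath p q ps" and c1: "at_most_one_corner ps"
    and h1: "vert_seg ps a" and v1: "horiz_seg ps b" and h2: "vert_seg ps c" and "a < b" "b < c"
  shows False
proof -
  have rp: "rpath ps" using shortest_rp[OF s] by auto
  obtain v where v: "a < v" "v \<le> b" "horiz_seg ps v" "ps!v \<in> corner_points ps"
    using corner_VH[OF rp h1 v1 \<open>a < b\<close>] by blast
  obtain h where h: "v < h" "h \<le> c" "vert_seg ps h" "ps!h \<in> corner_points ps"
    using corner_HV[OF rp v(3) h2] v(2) \<open>b < c\<close> by auto
  have eq: "ps!v = ps!h" using c1 v(4) h(4) unfolding at_most_one_corner_def by blast
  have "fst (ps!h) - fst (ps!v) = (\<Sum>i=v..<h. fst (ps!Suc i) - fst (ps!i))"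
    using sum_Suc_diff'[of v h "\<lambda>i. fst (ps!i)"] h(1) by simp
  moreover have "(\<Sum>i=v..<h. fst (ps!Suc i) - fst (ps!i)) \<noteq> 0"
    using mono_signs(1)[OF s] h(1,3) v(3) unfolding horiz_seg_def vert_seg_def
    by (intro sum_sign_nz[where n="length ps - 1"]) auto
  ultimately show False using eq by simp
qed

lemma HV_struct:
  fixes H V :: "nat \<Rightarrow> bool"
  assumes ex: "\<And>i. \<not> (H i \<and> V i)"
    and n1: "\<And>a b c. a < b \<Longrightarrow> b < c \<Longrightarrow> c < m \<Longrightarrow> H a \<Longrightarrow> V b \<Longrightarrow> H c \<Longrightarrow> False"
    and n2: "\<And>a b c. a < b \<Longrightarrow> b < c \<Longrightarrow> c < m \<Longrightarrow> V a \<Longrightarrow> H b \<Longrightarrow> V c \<Longrightarrow> False"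
  shows "\<exists>k\<le>m. ((\<forall>i<k. \<not> V i) \<and> (\<forall>i. k \<le> i \<and> i < m \<longrightarrow> \<not> H i)) \<or>
                ((\<forall>i<k. \<not> H i) \<and> (\<forall>i. k \<le> i \<and> i < m \<longrightarrow> \<not> V i))"
proof (cases "\<exists>i<m. V i")
  case False
  then show ?thesis by (intro exI[of _ m]) auto
next
  case True
  define k where "k = (LEAST i. i < m \<and> V i)"
  have k: "k < m" "V k" using LeastI_ex[OF True[unfolded Bex_def[symmetric]]] True unfolding k_def
    by (metis (mono_tags, lifting) LeastI_ex)+
  have kmin: "\<And>i. i < k \<Longrightarrow> \<not> V i" unfolding k_def using not_less_Least k(1)
    by (metis (mono_tags, lifting) dual_order.strict_trans k_def)
  show ?thesis
  proof (cases "\<forall>i. k \<le> i \<and> i < m \<longrightarrow> \<not> H i")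
    case True
    then show ?thesis using k kmin by (intro exI[of _ k]) auto
  next
    case False
    then obtain j where j: "k \<le> j" "j < m" "H j" by auto
    have jk: "k < j" using j k ex le_neq_implies_less by blast
    have noH: "\<And>a. a < k \<Longrightarrow> \<not> H a" using n1 jk j k by blast
    have exH: "\<exists>i. i < m \<and> H i" using j by blast
    define l where "l = (LEAST i. i < m \<and> H i)"
    have l: "l < m" "H l" using LeastI_ex[OF exH] unfolding l_def by auto
    have lmin: "\<And>i. i < l \<Longrightarrow> \<not> H i" unfolding l_def using not_less_Least l(1)
      by (metis (mono_tags, lifting) dual_order.strict_trans l_def)
    have kl: "k < l" using noH l k ex by (metis linorder_neqE_nat)
    have "\<forall>i. l \<le> i \<and> i < m \<longrightarrow> \<not> V i"
    proof (intro allI impI)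
      fix i assume i: "l \<le> i \<and> i < m"
      show "\<not> V i"
      proof
        assume "V i"
        then have "l < i" using i l ex le_neq_implies_less by blast
        then show False using n2[OF kl _ _ k(2) l(2) \<open>V i\<close>] i by blast
      qed
    qed
    then show ?thesis using lmin l by (intro exI[of _ l]) auto
  qed
qed

lemma ivt_idx:
  fixes f :: "nat \<Rightarrow> real"
  shows "a < b \<Longrightarrow> min (f a) (f b) \<le> t \<Longrightarrow> t \<le> max (f a) (f b) \<Longrightarrow>
    \<exists>i. a \<le> i \<and> i < b \<and> min (f i) (f (Suc i)) \<le> t \<and> t \<le> max (f i) (f (Suc i))"
proof (induction b)
  case 0 then show ?case by simp
next
  case (Suc b)
  show ?case
  proof (cases "a = b")
    case True then show ?thesis using Suc.prems by auto
  next
    case False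
    then have ab: "a < b" using Suc.prems by simp
    show ?thesis
    proof (cases "min (f a) (f b) \<le> t \<and> t \<le> max (f a) (f b)")
      case True
      then show ?thesis using Suc.IH ab by (meson less_Suc_eq)
    next
      case False
      then have "min (f b) (f (Suc b)) \<le> t \<and> t \<le> max (f b) (f (Suc b))"
        using Suc.prems by (auto simp: min_def max_def split: if_splits)
      then show ?thesis using ab by (intro exI[of _ b]) auto
    qed
  qed
qed


lemma in_rpath_set_seg: "Suc i < length ps \<Longrightarrow> z \<in> closed_segment (ps!i) (ps!Suc i) \<Longrightarrow> z \<in> rpath_set ps"
  unfolding rpath_set_def rseg_def by auto

lemma in_rpath_set_pt: "i < length ps \<Longrightarrow> ps!i \<in> rpath_set ps"
  unfolding rpath_set_def by auto

lemma shortest_L: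
  assumes s: "shortest_rpath p q ps" and c1: "at_most_one_corner ps"
  shows "\<exists>c. (c = (fst q, snd p) \<or> c = (fst p, snd q)) \<and> Lset p c q \<subseteq> rpath_set ps"
proof -
  have rp: "rpath ps" and hp: "hd ps = p" and lq: "last ps = q" using shortest_rp[OF s] by auto
  have ne: "ps \<noteq> []" using rp unfolding rpath_def by auto
  define m where "m = length ps - 1"
  have p0: "ps!0 = p" using hp ne by (simp add: hd_conv_nth)
  have qm: "ps!m = q" using lq ne unfolding m_def by (simp add: last_conv_nth)
  have mlen: "m < length ps" using ne unfolding m_def by simp
  have hlen: "\<And>i. horiz_seg ps i \<Longrightarrow> i < m" "\<And>i. vert_seg ps i \<Longrightarrow> i < m"
    unfolding horiz_seg_def vert_seg_def m_def by auto
  obtain k where k: "k \<le> m" and cases: "((\<forall>i<k. \<not> vert_seg ps i) \<and> (\<forall>i. k \<le> i \<and> i < m \<longrightarrow> \<not> horiz_seg ps i)) \<or>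
                ((\<forall>i<k. \<not> horiz_seg ps i) \<and> (\<forall>i. k \<le> i \<and> i < m \<longrightarrow> \<not> vert_seg ps i))"
    using HV_struct[of "horiz_seg ps" "vert_seg ps" m] no_HVH[OF s c1] no_VHV[OF s c1]
    unfolding horiz_seg_def vert_seg_def by blast
  from cases show ?thesis
  proof
    assume a: "(\<forall>i<k. \<not> vert_seg ps i) \<and> (\<forall>i. k \<le> i \<and> i < m \<longrightarrow> \<not> horiz_seg ps i)"
    have sy: "\<And>i. i \<le> k \<Longrightarrow> snd (ps!i) = snd p"
    proof -
      fix i show "i \<le> k \<Longrightarrow> snd (ps!i) = snd p"
      proof (induction i)
        case 0 then show ?case using p0 by simp
      next
        case (Suc j)
        then have "snd (ps!j) = snd (ps!Suc j)" using a k mlen not_v_snd[OF rp, of j] unfolding m_def by auto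
        then show ?case using Suc by simp
      qed
    qed
    have fx: "\<And>j. k \<le> j \<Longrightarrow> j \<le> m \<Longrightarrow> fst (ps!j) = fst (ps!k)"
    proof -
      fix j show "k \<le> j \<Longrightarrow> j \<le> m \<Longrightarrow> fst (ps!j) = fst (ps!k)"
      proof (induction j)
        case 0 then show ?case by simp
      next
        case (Suc j)
        show ?case
        proof (cases "k = Suc j")
          case True then show ?thesis by simp
        next
          case False
          then have "k \<le> j" using Suc.prems by simp
          then have "fst (ps!j) = fst (ps!Suc j)" using a Suc.prems mlen not_h_fst[OF rp, of j] unfolding m_def by auto
          then show ?thesis using Suc \<open>k \<le> j\<close> by simp
        qed
      qed
    qed
    define c where "c = (fst q, snd p)"
    have ck: "ps!k = c" unfolding c_def using sy[of k] fx[of m] k qm by (simp add: prod_eq_iff)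
    have seg1: "closed_segment p c \<subseteq> rpath_set ps"
    proof
      fix z assume z: "z \<in> closed_segment p c"
      show "z \<in> rpath_set ps"
      proof (cases "k = 0")
        case True
        then have "c = p" using ck p0 by simp
        then have "z = ps!0" using z p0 by simp
        then show ?thesis using in_rpath_set_pt[of 0 ps] ne by auto
      next
        case False
        have zz: "snd z = snd p" "min (fst (ps!0)) (fst (ps!k)) \<le> fst z" "fst z \<le> max (fst (ps!0)) (fst (ps!k))"
          using z seg_h[of p c z] ck p0 unfolding c_def by auto
        obtain i where i: "i < k" "min (fst (ps!i)) (fst (ps!Suc i)) \<le> fst z" "fst z \<le> max (fst (ps!i)) (fst (ps!Suc i))"
          using ivt_idx[of 0 k "\<lambda>i. fst (ps!i)" "fst z"] zz False by auto
        have "z \<in> closed_segment (ps!i) (ps!Suc i)"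
          using i sy[of i] sy[of "Suc i"] zz seg_h[of "ps!i" "ps!Suc i" z] by auto
        then show ?thesis using in_rpath_set_seg[of i ps z] i k mlen by auto
      qed
    qed
    have seg2: "closed_segment c q \<subseteq> rpath_set ps"
    proof
      fix z assume z: "z \<in> closed_segment c q"
      show "z \<in> rpath_set ps"
      proof (cases "k = m")
        case True
        then have "c = q" using ck qm by simp
        then have "z = ps!m" using z qm by simp
        then show ?thesis using in_rpath_set_pt[of _ ps] mlen by auto
      next
        case False
        have zz: "fst z = fst q" "min (snd (ps!k)) (snd (ps!m)) \<le> snd z" "snd z \<le> max (snd (ps!k)) (snd (ps!m))"
          using z seg_v[of c q z] ck qm unfolding c_def by auto
        obtain i where i: "k \<le> i" "i < m" "min (snd (ps!i)) (snd (ps!Suc i)) \<le> snd z" "snd z \<le> max (snd (ps!i)) (snd (ps!Suc i))"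
          using ivt_idx[of k m "\<lambda>i. snd (ps!i)" "snd z"] zz False k by auto
        have "fst (ps!i) = fst q" "fst (ps!Suc i) = fst q" using fx[of i] fx[of "Suc i"] fx[of m] i qm by auto
        then have "z \<in> closed_segment (ps!i) (ps!Suc i)"
          using i zz seg_v[of "ps!i" "ps!Suc i" z] by auto
        then show ?thesis using in_rpath_set_seg[of i ps z] i mlen unfolding m_def by auto
      qed
    qed
    show ?thesis using seg1 seg2 unfolding Lset_def c_def by auto
  next
    assume a: "(\<forall>i<k. \<not> horiz_seg ps i) \<and> (\<forall>i. k \<le> i \<and> i < m \<longrightarrow> \<not> vert_seg ps i)"
    have sy: "\<And>i. i \<le> k \<Longrightarrow> fst (ps!i) = fst p"
    proof -
      fix i show "i \<le> k \<Longrightarrow> fst (ps!i) = fst p"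
      proof (induction i)
        case 0 then show ?case using p0 by simp
      next
        case (Suc j)
        then have "fst (ps!j) = fst (ps!Suc j)" using a k mlen not_h_fst[OF rp, of j] unfolding m_def by auto
        then show ?case using Suc by simp
      qed
    qed
    have fx: "\<And>j. k \<le> j \<Longrightarrow> j \<le> m \<Longrightarrow> snd (ps!j) = snd (ps!k)"
    proof -
      fix j show "k \<le> j \<Longrightarrow> j \<le> m \<Longrightarrow> snd (ps!j) = snd (ps!k)"
      proof (induction j)
        case 0 then show ?case by simp
      next
        case (Suc j)
        show ?case
        proof (cases "k = Suc j")
          case True then show ?thesis by simp
        next
          case False
          then have "k \<le> j" using Suc.prems by simp
          then have "snd (ps!j) = snd (ps!Suc j)" using a Suc.prems mlen not_v_snd[OF rp, of j] unfolding m_def by auto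
          then show ?thesis using Suc \<open>k \<le> j\<close> by simp
        qed
      qed
    qed
    define c where "c = (fst p, snd q)"
    have ck: "ps!k = c" unfolding c_def using sy[of k] fx[of m] k qm by (simp add: prod_eq_iff)
    have seg1: "closed_segment p c \<subseteq> rpath_set ps"
    proof
      fix z assume z: "z \<in> closed_segment p c"
      show "z \<in> rpath_set ps"
      proof (cases "k = 0")
        case True
        then have "c = p" using ck p0 by simp
        then have "z = ps!0" using z p0 by simp
        then show ?thesis using in_rpath_set_pt[of 0 ps] ne by auto
      next
        case False
        have zz: "fst z = fst p" "min (snd (ps!0)) (snd (ps!k)) \<le> snd z" "snd z \<le> max (snd (ps!0)) (snd (ps!k))"
          using z seg_v[of p c z] ck p0 unfolding c_def by auto
        obtain i where i: "i < k" "min (snd (ps!i)) (snd (ps!Suc i)) \<le> snd z" "snd z \<le> max (snd (ps!i)) (snd (ps!Suc i))"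
          using ivt_idx[of 0 k "\<lambda>i. snd (ps!i)" "snd z"] zz False by auto
        have "z \<in> closed_segment (ps!i) (ps!Suc i)"
          using i sy[of i] sy[of "Suc i"] zz seg_v[of "ps!i" "ps!Suc i" z] by auto
        then show ?thesis using in_rpath_set_seg[of i ps z] i k mlen by auto
      qed
    qed
    have seg2: "closed_segment c q \<subseteq> rpath_set ps"
    proof
      fix z assume z: "z \<in> closed_segment c q"
      show "z \<in> rpath_set ps"
      proof (cases "k = m")
        case True
        then have "c = q" using ck qm by simp
        then have "z = ps!m" using z qm by simp
        then show ?thesis using in_rpath_set_pt[of _ ps] mlen by auto
      next
        case False
        have zz: "snd z = snd q" "min (fst (ps!k)) (fst (ps!m)) \<le> fst z" "fst z \<le> max (fst (ps!k)) (fst (ps!m))"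
          using z seg_h[of c q z] ck qm unfolding c_def by auto
        obtain i where i: "k \<le> i" "i < m" "min (fst (ps!i)) (fst (ps!Suc i)) \<le> fst z" "fst z \<le> max (fst (ps!i)) (fst (ps!Suc i))"
          using ivt_idx[of k m "\<lambda>i. fst (ps!i)" "fst z"] zz False k by auto
        have "snd (ps!i) = snd q" "snd (ps!Suc i) = snd q" using fx[of i] fx[of "Suc i"] fx[of m] i qm by auto
        then have "z \<in> closed_segment (ps!i) (ps!Suc i)"
          using i zz seg_h[of "ps!i" "ps!Suc i" z] by auto
        then show ?thesis using in_rpath_set_seg[of i ps z] i mlen unfolding m_def by auto
      qed
    qed
    show ?thesis using seg1 seg2 unfolding Lset_def c_def by auto
  qed
qed


locale std =
  fixes x0 x1 y0 y1 :: real and I :: "pt \<Rightarrow> bool"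
  assumes ordx: "x0 < x1" and ordy: "y0 < y1"
    and H1: "\<And>z. I z \<Longrightarrow> x0 < fst z \<and> fst z < x1 \<and> y0 < snd z \<and> snd z < y1"
    and H2: "\<And>z w. I z \<Longrightarrow> x0 < fst w \<Longrightarrow> fst w \<le> fst z \<Longrightarrow> y0 < snd w \<Longrightarrow> snd w \<le> snd z \<Longrightarrow> I w"
begin

definition F :: "pt \<Rightarrow> real" where
  "F z = (fst z - x0)*(y1-y0) + (snd z - y0)*(x1-x0) - (x1-x0)*(y1-y0)"

definition Wit :: "pt set \<Rightarrow> bool" where
  "Wit S \<longleftrightarrow> (\<exists>u m v. u \<in> S \<and> closed_segment u m \<subseteq> S \<and> closed_segment m v \<subseteq> S \<and>
     x0 \<le> fst m \<and> y0 \<le> snd m \<and>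
     ((fst u = x0 \<and> y0 < snd u \<and> snd u < y1) \<or> (snd u = y0 \<and> x0 < fst u \<and> fst u < x1)) \<and>
     x0 < fst v \<and> y0 < snd v \<and> \<not> I v)"

lemma on_d:
  assumes "x0 \<le> fst w" "y0 \<le> snd w" "F w = 0"
  shows "w \<in> closed_segment (x1,y0) (x0,y1)"
proof -
  define u where "u = (snd w - y0)/(y1-y0)"
  have dy: "y1 - y0 > 0" "x1 - x0 > 0" using ordx ordy by auto
  have "u*(y1-y0) = snd w - y0" unfolding u_def using dy by simp
  then have e1: "snd w = (1-u)*y0 + u*y1" by algebra
  have "(fst w - x0)*(y1-y0) = (x1-x0)*(y1-y0) - (snd w - y0)*(x1-x0)" using assms(3) unfolding F_def by simp
  then have "fst w - x0 = (x1-x0) - u*(x1-x0)" unfolding u_def using dy by (simp add: field_simps)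
  then have e2: "fst w = (1-u)*x1 + u*x0" by (simp add: algebra_simps)
  have "u \<ge> 0" unfolding u_def using assms dy by simp
  moreover have "u \<le> 1"
  proof -
    have "(snd w - y0)*(x1-x0) \<le> (x1-x0)*(y1-y0)"
      using assms(1,3) dy unfolding F_def by (smt (verit) mult_nonneg_nonneg)
    then have "snd w - y0 \<le> y1 - y0" using dy by (simp add: mult.commute)
    then show ?thesis unfolding u_def using dy by simp
  qed
  ultimately show ?thesis unfolding seg_mem using e1 e2 by auto
qed

lemma F_affine: "F ((1-t) *\<^sub>R a + t *\<^sub>R b) = (1-t) * F a + t * F b"
  unfolding F_def by (simp add: algebra_simps)

lemma seg_cross:
  assumes "x0 \<le> fst a" "y0 \<le> snd a" "x0 \<le> fst b" "y0 \<le> snd b" "F a \<le> 0" "0 \<le> F b"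
  shows "\<exists>w\<in>closed_segment a b. w \<in> closed_segment (x1,y0) (x0,y1)"
proof (cases "F a = F b")
  case True
  then have "F a = 0" using assms by simp
  then show ?thesis using on_d[of a] assms by (metis ends_in_segment(1))
next
  case False
  define t where "t = F a / (F a - F b)"
  have den: "F a - F b < 0" using False assms by simp
  have t01: "0 \<le> t" "t \<le> 1" unfolding t_def using den assms by (simp_all add: divide_simps)
  define w where "w = (1-t) *\<^sub>R a + t *\<^sub>R b"
  have "F w = (1-t) * F a + t * F b" unfolding w_def by (rule F_affine)
  also have "\<dots> = F a - t * (F a - F b)" by (simp add: algebra_simps)
  also have "\<dots> = 0" unfolding t_def using den by simp
  finally have Fw: "F w = 0" .
  have ws: "w \<in> closed_segment a b" unfolding w_def closed_segment_def using t01 by auto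
  have "x0 \<le> fst w" "y0 \<le> snd w" using seg_coords[OF ws] assms by auto
  then show ?thesis using ws on_d Fw by blast
qed

lemma cross_from_wit:
  assumes "Wit S"
  shows "\<exists>w\<in>S. w \<in> closed_segment (x0,y0) (x0,y1) \<union> closed_segment (x0,y0) (x1,y0)"
proof -
  obtain u where u: "u \<in> S" "(fst u = x0 \<and> y0 < snd u \<and> snd u < y1) \<or> (snd u = y0 \<and> x0 < fst u \<and> fst u < x1)"
    using assms unfolding Wit_def by blast
  then have "u \<in> closed_segment (x0,y0) (x0,y1) \<union> closed_segment (x0,y0) (x1,y0)"
    using seg_v[of "(x0,y0)" "(x0,y1)" u] seg_h[of "(x0,y0)" "(x1,y0)" u] ordx ordy by auto
  then show ?thesis using u by blast
qed

lemma diag_from_wit: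
  assumes H3: "\<And>z. x0 < fst z \<Longrightarrow> y0 < snd z \<Longrightarrow> F z < 0 \<Longrightarrow> I z"
    and W: "Wit S"
  shows "\<exists>w\<in>S. w \<in> closed_segment (x1,y0) (x0,y1)"
proof -
  obtain u m v where w: "u \<in> S" "closed_segment u m \<subseteq> S" "closed_segment m v \<subseteq> S"
     "x0 \<le> fst m" "y0 \<le> snd m"
     "(fst u = x0 \<and> y0 < snd u \<and> snd u < y1) \<or> (snd u = y0 \<and> x0 < fst u \<and> fst u < x1)"
     "x0 < fst v" "y0 < snd v" "\<not> I v"
    using W unfolding Wit_def by blast
  have dy: "y1 - y0 > 0" "x1 - x0 > 0" using ordx ordy by auto
  have Fu: "F u \<le> 0"
    using w(6)
  proof
    assume a: "fst u = x0 \<and> y0 < snd u \<and> snd u < y1"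
    have "F u = (x1-x0)*(snd u - y1)" unfolding F_def using a by (simp add: algebra_simps)
    also have "\<dots> \<le> 0" using a dy by (simp add: mult_nonneg_nonpos)
    finally show ?thesis .
  next
    assume a: "snd u = y0 \<and> x0 < fst u \<and> fst u < x1"
    have "F u = (y1-y0)*(fst u - x1)" unfolding F_def using a by (simp add: algebra_simps)
    also have "\<dots> \<le> 0" using a dy by (simp add: mult_nonneg_nonpos)
    finally show ?thesis .
  qed
  have Fv: "0 \<le> F v" using H3 w(7,8,9) by fastforce
  have ub: "x0 \<le> fst u" "y0 \<le> snd u" using w(6) by auto
  show ?thesis
  proof (cases "0 \<le> F m")
    case True
    then obtain x where "x \<in> closed_segment u m" "x \<in> closed_segment (x1,y0) (x0,y1)"
      using seg_cross[of u m] ub w(4,5) Fu by auto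
    then show ?thesis using w(2) by blast
  next
    case False
    then obtain x where "x \<in> closed_segment m v" "x \<in> closed_segment (x1,y0) (x0,y1)"
      using seg_cross[of m v] w(4,5,7,8) Fv by auto
    then show ?thesis using w(3) by blast
  qed
qed

end


context std begin

lemma wit_intro:
  assumes "closed_segment A B \<subseteq> S" "u \<in> closed_segment A B" "m \<in> closed_segment A B"
    "closed_segment C D \<subseteq> S" "m \<in> closed_segment C D" "v \<in> closed_segment C D"
    "x0 \<le> fst m" "y0 \<le> snd m"
    "(fst u = x0 \<and> y0 < snd u \<and> snd u < y1) \<or> (snd u = y0 \<and> x0 < fst u \<and> fst u < x1)"
    "x0 < fst v" "y0 < snd v" "\<not> I v"
  shows "Wit S"
proof -
  have "closed_segment u m \<subseteq> S"
    using closed_segment_subset[OF assms(2,3) convex_closed_segment] assms(1) by blast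
  moreover have "closed_segment m v \<subseteq> S"
    using closed_segment_subset[OF assms(5,6) convex_closed_segment] assms(4) by blast
  moreover have "u \<in> S" using assms(1,2) by blast
  ultimately show ?thesis unfolding Wit_def using assms(7-12) by blast
qed

lemma L_parts: "closed_segment p c \<subseteq> Lset p c q" "closed_segment c q \<subseteq> Lset p c q"
  unfolding Lset_def by auto

lemma wit_core:
  assumes np: "\<not> I p" and nq: "\<not> I q" and pq: "fst p \<le> fst q"
    and b1: "\<exists>z\<in>Lset p (fst p, snd q) q. I z" and b2: "\<exists>z\<in>Lset p (fst q, snd p) q. I z"
  shows "Wit (Lset p (fst p, snd q) q) \<and> Wit (Lset p (fst q, snd p) q)"
proof -
  define a b a' b' where "a = fst p" "b = snd p" "a' = fst q" "b' = snd q"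
  define c1 c2 where "c1 = (a, b')" "c2 = (a', b)"
  have pe: "p = (a,b)" and qe: "q = (a',b')" unfolding a_b_a'_b'_def by auto
  have c1e: "(fst p, snd q) = c1" and c2e: "(fst q, snd p) = c2" unfolding c1_c2_def a_b_a'_b'_def by auto
  have aa: "a \<le> a'" using pq unfolding a_b_a'_b'_def by simp
  obtain z1 where z1: "z1 \<in> Lset p c1 q" "I z1" using b1 c1e by auto
  obtain z2 where z2: "z2 \<in> Lset p c2 q" "I z2" using b2 c2e by auto
  note Hz1 = H1[OF z1(2)] and Hz2 = H1[OF z2(2)]
  have mem1: "z \<in> closed_segment p c1 \<longleftrightarrow> fst z = a \<and> min b b' \<le> snd z \<and> snd z \<le> max b b'" for z
    using seg_v[of p c1 z] unfolding pe qe c1_c2_def by simp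
  have mem2: "z \<in> closed_segment c1 q \<longleftrightarrow> snd z = b' \<and> a \<le> fst z \<and> fst z \<le> a'" for z
    using seg_h[of c1 q z] aa unfolding pe qe c1_c2_def by simp
  have mem3: "z \<in> closed_segment p c2 \<longleftrightarrow> snd z = b \<and> a \<le> fst z \<and> fst z \<le> a'" for z
    using seg_h[of p c2 z] aa unfolding pe qe c1_c2_def by simp
  have mem4: "z \<in> closed_segment c2 q \<longleftrightarrow> fst z = a' \<and> min b b' \<le> snd z \<and> snd z \<le> max b b'" for z
    using seg_v[of c2 q z] unfolding pe qe c1_c2_def by simp
  have L1: "z \<in> Lset p c1 q \<longleftrightarrow> z \<in> closed_segment p c1 \<or> z \<in> closed_segment c1 q" for z
    unfolding Lset_def by auto
  have L2: "z \<in> Lset p c2 q \<longleftrightarrow> z \<in> closed_segment p c2 \<or> z \<in> closed_segment c2 q" for z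
    unfolding Lset_def by auto
  note P1 = L_parts[where p=p and c=c1 and q=q] and P2 = L_parts[where p=p and c=c2 and q=q]
  have co: "fst q = a'" "snd q = b'" "fst p = a" "snd p = b" "fst c1 = a" "snd c1 = b'" "fst c2 = a'" "snd c2 = b"
    unfolding a_b_a'_b'_def c1_c2_def by auto
  have nIp: "\<not> (x0 < a \<and> y0 < b \<and> a \<le> fst z \<and> b \<le> snd z \<and> I z)" for z
    using H2[of z p] np unfolding pe by auto
  have nIq: "\<not> (x0 < a' \<and> y0 < b' \<and> a' \<le> fst z \<and> b' \<le> snd z \<and> I z)" for z
    using H2[of z q] nq unfolding qe by auto
  have ends: "p \<in> closed_segment p c1" "c1 \<in> closed_segment p c1" "c1 \<in> closed_segment c1 q" "q \<in> closed_segment c1 q"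
     "p \<in> closed_segment p c2" "c2 \<in> closed_segment p c2" "c2 \<in> closed_segment c2 q" "q \<in> closed_segment c2 q"
    by auto
  show ?thesis unfolding c1e c2e
  proof (cases "b \<le> b'")
    case NE: True
    have z1c: "a \<le> fst z1" "b \<le> snd z1" using z1(1) NE unfolding L1 mem1 mem2 by auto
    have "a \<le> x0 \<or> b \<le> y0" using nIp[of z1] z1c z1(2) by auto
    then show "Wit (Lset p c1 q) \<and> Wit (Lset p c2 q)"
    proof
      assume ax: "a \<le> x0"
      have z1s: "z1 \<in> closed_segment c1 q" using z1(1) Hz1 ax unfolding L1 mem1 by auto
      then have z1c': "snd z1 = b'" "a \<le> fst z1" "fst z1 \<le> a'" unfolding mem2 by auto
      have W1: "Wit (Lset p c1 q)"
        by (rule wit_intro[of c1 q _ "(x0,b')" "(x0,b')" c1 q q])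
           (use P1 ends Hz1 z1c' ax nq in \<open>auto simp: mem2 co\<close>)
      have W2: "Wit (Lset p c2 q)"
      proof (cases "y0 < b")
        case True
        show ?thesis
          by (rule wit_intro[of p c2 _ "(x0,b)" c2 c2 q q])
             (use P2 ends Hz1 z1c' ax nq True NE in \<open>auto simp: mem3 co\<close>)
      next
        case False
        have z2s: "z2 \<in> closed_segment c2 q" using z2(1) Hz2 False unfolding L2 mem3 by auto
        then have z2c: "fst z2 = a'" "b \<le> snd z2" "snd z2 \<le> b'" unfolding mem4 using NE by auto
        show ?thesis
          by (rule wit_intro[of c2 q _ "(a',y0)" "(a',y0)" c2 q q])
             (use P2 ends Hz2 z2c False NE nq in \<open>auto simp: mem4 co\<close>)
      qed
      show ?thesis using W1 W2 by blast
    next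
      assume by0: "b \<le> y0"
      show ?thesis
      proof (cases "a \<le> x0")
        case True
        have z1s: "z1 \<in> closed_segment c1 q" using z1(1) Hz1 True unfolding L1 mem1 by auto
        then have z1c': "snd z1 = b'" "a \<le> fst z1" "fst z1 \<le> a'" unfolding mem2 by auto
        have W1: "Wit (Lset p c1 q)"
          by (rule wit_intro[of c1 q _ "(x0,b')" "(x0,b')" c1 q q])
             (use P1 ends Hz1 z1c' True nq in \<open>auto simp: mem2 co\<close>)
        have z2s: "z2 \<in> closed_segment c2 q" using z2(1) Hz2 by0 unfolding L2 mem3 by auto
        then have z2c: "fst z2 = a'" "b \<le> snd z2" "snd z2 \<le> b'" unfolding mem4 using NE by auto
        have W2: "Wit (Lset p c2 q)"
          by (rule wit_intro[of c2 q _ "(a',y0)" "(a',y0)" c2 q q])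
             (use P2 ends Hz2 z2c by0 NE nq in \<open>auto simp: mem4 co\<close>)
        show ?thesis using W1 W2 by blast
      next
        case False
        have z2s: "z2 \<in> closed_segment c2 q" using z2(1) Hz2 by0 unfolding L2 mem3 by auto
        then have z2c: "fst z2 = a'" "b \<le> snd z2" "snd z2 \<le> b'" unfolding mem4 using NE by auto
        have W2: "Wit (Lset p c2 q)"
          by (rule wit_intro[of c2 q _ "(a',y0)" "(a',y0)" c2 q q])
             (use P2 ends Hz2 z2c by0 NE nq in \<open>auto simp: mem4 co\<close>)
        have ax1: "a < x1" using z1c Hz1 by auto
        have b'y: "y0 < b'" using z1(1) Hz1 NE unfolding L1 mem1 mem2 by auto
        have W1: "Wit (Lset p c1 q)"
          by (rule wit_intro[of p c1 _ "(a,y0)" c1 c1 q q])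
             (use P1 ends False ax1 b'y by0 NE nq aa in \<open>auto simp: mem1 co\<close>)
        show ?thesis using W1 W2 by blast
      qed
    qed
  next
    case NW: False
    show "Wit (Lset p c1 q) \<and> Wit (Lset p c2 q)"
    proof (cases "z2 \<in> closed_segment p c2")
      case True
      then have z2c: "snd z2 = b" "a \<le> fst z2" "fst z2 \<le> a'" unfolding mem3 by auto
      have ax: "a \<le> x0" using nIp[of z2] z2c z2(2) Hz2 by auto
      have z1s: "z1 \<in> closed_segment c1 q" using z1(1) Hz1 ax unfolding L1 mem1 by auto
      then have z1c: "snd z1 = b'" "a \<le> fst z1" "fst z1 \<le> a'" unfolding mem2 by auto
      have W1: "Wit (Lset p c1 q)"
        by (rule wit_intro[of c1 q _ "(x0,b')" "(x0,b')" c1 q q])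
           (use P1 ends Hz1 z1c ax nq in \<open>auto simp: mem2 co\<close>)
      have W2: "Wit (Lset p c2 q)"
        by (rule wit_intro[of p c2 _ "(x0,b)" c2 c2 q q])
           (use P2 ends Hz1 Hz2 z1c z2c ax nq NW in \<open>auto simp: mem3 co\<close>)
      show ?thesis using W1 W2 by blast
    next
      case False
      then have z2s: "z2 \<in> closed_segment c2 q" using z2(1) unfolding L2 by auto
      then have z2c: "fst z2 = a'" "b' \<le> snd z2" "snd z2 \<le> b" unfolding mem4 using NW by auto
      have by0: "b' \<le> y0" using nIq[of z2] z2c z2(2) Hz2 by auto
      have z1s: "z1 \<in> closed_segment p c1" using z1(1) Hz1 by0 unfolding L1 mem2 by auto
      then have z1c: "fst z1 = a" "b' \<le> snd z1" "snd z1 \<le> b" unfolding mem1 using NW by auto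
      have W1: "Wit (Lset p c1 q)"
        by (rule wit_intro[of p c1 _ "(a,y0)" "(a,y0)" p c1 p])
           (use P1 ends Hz1 z1c by0 np NW in \<open>auto simp: mem1 co\<close>)
      have W2: "Wit (Lset p c2 q)"
        by (rule wit_intro[of c2 q _ "(a',y0)" c2 p c2 p])
           (use P2 ends Hz1 Hz2 z1c z2c by0 np NW in \<open>auto simp: mem4 co closed_segment_commute\<close>)
      show ?thesis using W1 W2 by blast
    qed
  qed
qed

end


lemma Lset_sym: "Lset p c q = Lset q c p"
  unfolding Lset_def by (auto simp: closed_segment_commute)

lemma (in std) wit_all:
  assumes np: "\<not> I p" and nq: "\<not> I q"
    and b1: "\<exists>z\<in>Lset p (fst p, snd q) q. I z" and b2: "\<exists>z\<in>Lset p (fst q, snd p) q. I z"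
    and c: "c = (fst q, snd p) \<or> c = (fst p, snd q)"
  shows "Wit (Lset p c q)"
proof (cases "fst p \<le> fst q")
  case True
  then show ?thesis using wit_core[OF np nq True b1 b2] c by auto
next
  case False
  have b1': "\<exists>z\<in>Lset q (fst q, snd p) p. I z" using b2 Lset_sym by metis
  have b2': "\<exists>z\<in>Lset q (fst p, snd q) p. I z" using b1 Lset_sym by metis
  have "fst q \<le> fst p" using False by simp
  from wit_core[OF nq np this b1' b2'] c show ?thesis using Lset_sym by metis
qed

lemma shortest_same_snd:
  assumes s: "shortest_rpath p q ps" and e: "snd p = snd q"
  shows "closed_segment p q \<subseteq> rpath_set ps"
proof -
  have rp: "rpath ps" and hp: "hd ps = p" and lq: "last ps = q" using shortest_rp[OF s] by auto
  have ne: "ps \<noteq> []" using rp unfolding rpath_def by auto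
  define m where "m = length ps - 1"
  have p0: "ps!0 = p" using hp ne by (simp add: hd_conv_nth)
  have qm: "ps!m = q" using lq ne unfolding m_def by (simp add: last_conv_nth)
  have mlen: "m < length ps" using ne unfolding m_def by simp
  define A where "A = (\<Sum>i<m. \<bar>fst (ps!Suc i) - fst (ps!i)\<bar>)"
  define B where "B = (\<Sum>i<m. \<bar>snd (ps!Suc i) - snd (ps!i)\<bar>)"
  have "A + B = l1dist p q" using shortest_len[OF s] unfolding A_def B_def rlength_alt sum_split_abs m_def by simp
  also have "\<dots> = \<bar>\<Sum>i<m. fst (ps!Suc i) - fst (ps!i)\<bar>"
    unfolding l1dist_def m_def tele_fst[OF ne, symmetric] hp lq using e by (simp add: abs_minus_commute)
  also have "\<dots> \<le> A" unfolding A_def by (rule sum_abs)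
  finally have "B \<le> 0" by simp
  moreover have "B \<ge> 0" unfolding B_def by (intro sum_nonneg) auto
  ultimately have "B = 0" by simp
  then have "\<forall>i\<in>{..<m}. \<bar>snd (ps!Suc i) - snd (ps!i)\<bar> = 0" unfolding B_def
    by (subst (asm) sum_nonneg_eq_0_iff) auto
  then have st: "\<And>i. i < m \<Longrightarrow> snd (ps!Suc i) = snd (ps!i)" by auto
  have sy: "\<And>i. i \<le> m \<Longrightarrow> snd (ps!i) = snd p"
  proof -
    fix i show "i \<le> m \<Longrightarrow> snd (ps!i) = snd p"
      by (induction i) (auto simp: p0 st)
  qed
  show ?thesis
  proof
    fix z assume z: "z \<in> closed_segment p q"
    show "z \<in> rpath_set ps"
    proof (cases "m = 0")
      case True
      then have "p = q" using p0 qm by simp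
      then have "z = ps!0" using z p0 by simp
      then show ?thesis using in_rpath_set_pt[of 0 ps] ne by auto
    next
      case False
      have zz: "snd z = snd p" "min (fst (ps!0)) (fst (ps!m)) \<le> fst z" "fst z \<le> max (fst (ps!0)) (fst (ps!m))"
        using z seg_h[of p q z] e p0 qm by auto
      obtain i where i: "i < m" "min (fst (ps!i)) (fst (ps!Suc i)) \<le> fst z" "fst z \<le> max (fst (ps!i)) (fst (ps!Suc i))"
        using ivt_idx[of 0 m "\<lambda>i. fst (ps!i)" "fst z"] zz False by auto
      have "z \<in> closed_segment (ps!i) (ps!Suc i)"
        using i sy[of i] sy[of "Suc i"] zz seg_h[of "ps!i" "ps!Suc i" z] by auto
      then show ?thesis using in_rpath_set_seg[of i ps z] i mlen unfolding m_def by auto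
    qed
  qed
qed

lemma shortest_same_fst:
  assumes s: "shortest_rpath p q ps" and e: "fst p = fst q"
  shows "closed_segment p q \<subseteq> rpath_set ps"
proof -
  have rp: "rpath ps" and hp: "hd ps = p" and lq: "last ps = q" using shortest_rp[OF s] by auto
  have ne: "ps \<noteq> []" using rp unfolding rpath_def by auto
  define m where "m = length ps - 1"
  have p0: "ps!0 = p" using hp ne by (simp add: hd_conv_nth)
  have qm: "ps!m = q" using lq ne unfolding m_def by (simp add: last_conv_nth)
  have mlen: "m < length ps" using ne unfolding m_def by simp
  define A where "A = (\<Sum>i<m. \<bar>fst (ps!Suc i) - fst (ps!i)\<bar>)"
  define B where "B = (\<Sum>i<m. \<bar>snd (ps!Suc i) - snd (ps!i)\<bar>)"
  have "A + B = l1dist p q" using shortest_len[OF s] unfolding A_def B_def rlength_alt sum_split_abs m_def by simp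
  also have "\<dots> = \<bar>\<Sum>i<m. snd (ps!Suc i) - snd (ps!i)\<bar>"
    unfolding l1dist_def m_def tele_snd[OF ne, symmetric] hp lq using e by (simp add: abs_minus_commute)
  also have "\<dots> \<le> B" unfolding B_def by (rule sum_abs)
  finally have "A \<le> 0" by simp
  moreover have "A \<ge> 0" unfolding A_def by (intro sum_nonneg) auto
  ultimately have "A = 0" by simp
  then have "\<forall>i\<in>{..<m}. \<bar>fst (ps!Suc i) - fst (ps!i)\<bar> = 0" unfolding A_def
    by (subst (asm) sum_nonneg_eq_0_iff) auto
  then have st: "\<And>i. i < m \<Longrightarrow> fst (ps!Suc i) = fst (ps!i)" by auto
  have sy: "\<And>i. i \<le> m \<Longrightarrow> fst (ps!i) = fst p"
  proof -
    fix i show "i \<le> m \<Longrightarrow> fst (ps!i) = fst p"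
      by (induction i) (auto simp: p0 st)
  qed
  show ?thesis
  proof
    fix z assume z: "z \<in> closed_segment p q"
    show "z \<in> rpath_set ps"
    proof (cases "m = 0")
      case True
      then have "p = q" using p0 qm by simp
      then have "z = ps!0" using z p0 by simp
      then show ?thesis using in_rpath_set_pt[of 0 ps] ne by auto
    next
      case False
      have zz: "fst z = fst p" "min (snd (ps!0)) (snd (ps!m)) \<le> snd z" "snd z \<le> max (snd (ps!0)) (snd (ps!m))"
        using z seg_v[of p q z] e p0 qm by auto
      obtain i where i: "i < m" "min (snd (ps!i)) (snd (ps!Suc i)) \<le> snd z" "snd z \<le> max (snd (ps!i)) (snd (ps!Suc i))"
        using ivt_idx[of 0 m "\<lambda>i. snd (ps!i)" "snd z"] zz False by auto
      have "z \<in> closed_segment (ps!i) (ps!Suc i)"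
        using i sy[of i] sy[of "Suc i"] zz seg_v[of "ps!i" "ps!Suc i" z] by auto
      then show ?thesis using in_rpath_set_seg[of i ps z] i mlen unfolding m_def by auto
    qed
  qed
qed

lemma rc_h: "rect_convex W \<Longrightarrow> u \<in> W \<Longrightarrow> v \<in> W \<Longrightarrow> snd u = snd v \<Longrightarrow> closed_segment u v \<subseteq> W"
  unfolding rect_convex_def using shortest_same_snd by blast

lemma rc_v: "rect_convex W \<Longrightarrow> u \<in> W \<Longrightarrow> v \<in> W \<Longrightarrow> fst u = fst v \<Longrightarrow> closed_segment u v \<subseteq> W"
  unfolding rect_convex_def using shortest_same_fst by blast


locale stdW =
  fixes x0 x1 y0 y1 :: real and W :: "pt set"
  assumes ox: "x0 < x1" and oy: "y0 < y1"
    and sub: "W \<subseteq> cbox (x0,y0) (x1,y1)"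
    and DL: "\<And>u z. u \<in> W \<Longrightarrow> x0 \<le> fst z \<Longrightarrow> fst z \<le> fst u \<Longrightarrow> y0 \<le> snd z \<Longrightarrow> snd z \<le> snd u \<Longrightarrow> z \<in> W"
begin

lemma box_int:
  assumes "u \<in> W" "x0 < fst z" "fst z < fst u" "y0 < snd z" "snd z < snd u"
  shows "z \<in> interior W"
proof -
  have "box (x0,y0) u \<subseteq> W"
  proof
    fix v assume "v \<in> box (x0,y0) u"
    then have "x0 < fst v" "fst v < fst u" "y0 < snd v" "snd v < snd u"
      using mem_box2[of v x0 y0 "fst u" "snd u"] by auto
    then show "v \<in> W" using DL[OF assms(1), of v] by auto
  qed
  moreover have "z \<in> box (x0,y0) u" using assms mem_box2[of z x0 y0 "fst u" "snd u"] by auto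
  ultimately show ?thesis using interior_maximal open_box by blast
qed

lemma int_sub: "z \<in> interior W \<Longrightarrow> x0 < fst z \<and> fst z < x1 \<and> y0 < snd z \<and> snd z < y1"
proof -
  assume "z \<in> interior W"
  then have "z \<in> interior (cbox (x0,y0) (x1,y1))" using interior_mono[OF sub] by blast
  then show ?thesis using mem_box2 by simp
qed

lemma int_up: "z \<in> interior W \<Longrightarrow> \<exists>u\<in>W. fst z < fst u \<and> snd z < snd u"
proof -
  assume "z \<in> interior W"
  then obtain e where e: "e > 0" "ball z e \<subseteq> W" unfolding mem_interior by blast
  define u where "u = (fst z + e/4, snd z + e/4)"
  have "dist z u = sqrt ((e/4)^2 + (e/4)^2)"
    unfolding u_def using e(1) by (cases z) (simp add: dist_Pair_Pair dist_real_def)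
  also have "\<dots> < e"
  proof -
    have "(e/4)^2 + (e/4)^2 < e^2" using e(1) by (simp add: power2_eq_square field_simps)
    then have "sqrt ((e/4)^2 + (e/4)^2) < sqrt (e^2)" by (rule real_sqrt_less_mono)
    then show ?thesis using e(1) by simp
  qed
  finally have "u \<in> W" using e(2) by auto
  moreover have "fst z < fst u" "snd z < snd u" unfolding u_def using e(1) by auto
  ultimately show ?thesis by blast
qed

sublocale std x0 x1 y0 y1 "\<lambda>z. z \<in> interior W"
proof
  show "x0 < x1" "y0 < y1" by (rule ox, rule oy)
  show "\<And>z. z \<in> interior W \<Longrightarrow> x0 < fst z \<and> fst z < x1 \<and> y0 < snd z \<and> snd z < y1" by (rule int_sub)
  show "\<And>z w. z \<in> interior W \<Longrightarrow> x0 < fst w \<Longrightarrow> fst w \<le> fst z \<Longrightarrow> y0 < snd w \<Longrightarrow> snd w \<le> snd z \<Longrightarrow> w \<in> interior W"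
  proof -
    fix z w assume a: "z \<in> interior W" "x0 < fst w" "fst w \<le> fst z" "y0 < snd w" "snd w \<le> snd z"
    obtain u where "u \<in> W" "fst z < fst u" "snd z < snd u" using int_up[OF a(1)] by blast
    then show "w \<in> interior W" using box_int[of u w] a by auto
  qed
qed

lemma H3:
  assumes d: "closed_segment (x1,y0) (x0,y1) \<subseteq> W"
  shows "x0 < fst z \<Longrightarrow> y0 < snd z \<Longrightarrow> F z < 0 \<Longrightarrow> z \<in> interior W"
proof -
  assume z: "x0 < fst z" "y0 < snd z" "F z < 0"
  define k where "k = (y1-y0) + (x1-x0)"
  have k: "k > 0" unfolding k_def using ox oy by simp
  define e where "e = - F z / k"
  have e: "e > 0" unfolding e_def using k z(3) by (simp add: divide_neg_pos)
  define u where "u = (fst z + e, snd z + e)"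
  have "F u = F z + e * k" unfolding u_def F_def k_def by (simp add: algebra_simps)
  also have "\<dots> = 0" unfolding e_def using k by simp
  finally have "u \<in> closed_segment (x1,y0) (x0,y1)" using on_d[of u] z e unfolding u_def by auto
  then have "u \<in> W" using d by blast
  then show "z \<in> interior W" using box_int[of u z] z e unfolding u_def by auto
qed

end


definition refl :: "real \<Rightarrow> real \<Rightarrow> pt \<Rightarrow> pt" where
  "refl sx sy z = (sx * fst z, sy * snd z)"

lemma refl_linear: "linear (refl sx sy)"
  by (rule linearI) (auto simp: refl_def algebra_simps)

lemma span_corners:
  fixes a b :: pt
  assumes sub: "closed_segment a b \<subseteq> cbox (x0,y0) (x1,y1)" and "x0 < x1" "y0 < y1"
    and hy: "\<And>y. y0 < y \<Longrightarrow> y < y1 \<Longrightarrow> \<exists>w\<in>closed_segment a b. snd w = y"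
    and hx: "\<And>x. x0 < x \<Longrightarrow> x < x1 \<Longrightarrow> \<exists>w\<in>closed_segment a b. fst w = x"
  shows "(snd a = y0 \<and> snd b = y1 \<or> snd a = y1 \<and> snd b = y0) \<and> (fst a = x0 \<and> fst b = x1 \<or> fst a = x1 \<and> fst b = x0)"
proof -
  have ab: "a \<in> cbox (x0,y0) (x1,y1)" "b \<in> cbox (x0,y0) (x1,y1)" using sub by auto
  then have bnd: "x0 \<le> fst a" "fst a \<le> x1" "y0 \<le> snd a" "snd a \<le> y1" "x0 \<le> fst b" "fst b \<le> x1" "y0 \<le> snd b" "snd b \<le> y1"
    using mem_cbox2 by auto
  have c1: "min (snd a) (snd b) \<le> y0"
  proof (rule ccontr)
    assume nt: "\<not> ?thesis"
    define y where "y = (y0 + min (snd a) (snd b))/2"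
    have "y0 < y" "y < y1" unfolding y_def using nt bnd by auto
    then obtain w where "w \<in> closed_segment a b" "snd w = y" using hy by blast
    then show False using seg_coords[of w a b] unfolding y_def using nt by auto
  qed
  have c2: "max (snd a) (snd b) \<ge> y1"
  proof (rule ccontr)
    assume nt: "\<not> ?thesis"
    define y where "y = (y1 + max (snd a) (snd b))/2"
    have "y0 < y" "y < y1" unfolding y_def using nt bnd by auto
    then obtain w where "w \<in> closed_segment a b" "snd w = y" using hy by blast
    then show False using seg_coords[of w a b] unfolding y_def using nt by auto
  qed
  have c3: "min (fst a) (fst b) \<le> x0"
  proof (rule ccontr)
    assume nt: "\<not> ?thesis"
    define x where "x = (x0 + min (fst a) (fst b))/2"
    have "x0 < x" "x < x1" unfolding x_def using nt bnd by auto
    then obtain w where "w \<in> closed_segment a b" "fst w = x" using hx by blast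
    then show False using seg_coords[of w a b] unfolding x_def using nt by auto
  qed
  have c4: "max (fst a) (fst b) \<ge> x1"
  proof (rule ccontr)
    assume nt: "\<not> ?thesis"
    define x where "x = (x1 + max (fst a) (fst b))/2"
    have "x0 < x" "x < x1" unfolding x_def using nt bnd by auto
    then obtain w where "w \<in> closed_segment a b" "fst w = x" using hx by blast
    then show False using seg_coords[of w a b] unfolding x_def using nt by auto
  qed
  show ?thesis using c1 c2 c3 c4 bnd assms(2,3) by (auto simp: min_def max_def split: if_splits)
qed

locale orient =
  fixes W :: "pt set" and ox oy mx my sx sy :: real
  assumes neqx: "ox \<noteq> mx" and neqy: "oy \<noteq> my"
    and sxd: "sx = (if ox < mx then 1 else -1)" and syd: "sy = (if oy < my then 1 else -1)"
    and G1: "\<And>w. w \<in> W \<Longrightarrow> min ox mx \<le> fst w \<and> fst w \<le> max ox mx \<and> min oy my \<le> snd w \<and> snd w \<le> max oy my"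
    and G2: "\<And>u z. u \<in> W \<Longrightarrow> min ox (fst u) \<le> fst z \<Longrightarrow> fst z \<le> max ox (fst u) \<Longrightarrow>
                 min oy (snd u) \<le> snd z \<Longrightarrow> snd z \<le> max oy (snd u) \<Longrightarrow> z \<in> W"
    and G4a: "\<exists>w\<in>W. snd w = my \<and> fst w \<noteq> ox"
    and G4b: "\<exists>w\<in>W. fst w = mx \<and> snd w \<noteq> oy"
begin

abbreviation "g \<equiv> refl sx sy"

lemma sx1: "sx * sx = 1" "sy * sy = 1" using sxd syd by auto

lemma g_inv[simp]: "g (g z) = z"
  unfolding refl_def using sx1 by (simp add: mult.assoc[symmetric])

lemma g_inj: "inj g" by (metis g_inv injI)

lemma g_lin: "linear g" by (rule refl_linear)

lemma g_fst[simp]: "fst (g z) = sx * fst z" and g_snd[simp]: "snd (g z) = sy * snd z"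
  unfolding refl_def by auto

lemma seg_img: "closed_segment (g a) (g b) = g ` closed_segment a b"
  by (rule closed_segment_linear_image[OF g_lin])

lemma Lset_img: "Lset (g p) (g c) (g q) = g ` Lset p c q"
  unfolding Lset_def seg_img image_Un ..

lemma int_img: "interior (g ` W) = g ` interior W"
  by (rule interior_injective_linear_image[OF g_lin g_inj])

lemma img_mem: "g z \<in> g ` A \<longleftrightarrow> z \<in> A"
  using g_inj by (auto dest: injD)

lemma mem_img: "z \<in> g ` A \<longleftrightarrow> g z \<in> A"
  by (metis g_inv image_iff)

sublocale S: stdW "sx * ox" "sx * mx" "sy * oy" "sy * my" "g ` W"
proof
  show "sx * ox < sx * mx" using sxd neqx by auto
  show "sy * oy < sy * my" using syd neqy by auto
  show "g ` W \<subseteq> cbox (sx * ox, sy * oy) (sx * mx, sy * my)"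
  proof
    fix z assume "z \<in> g ` W"
    then obtain w where w: "w \<in> W" "z = g w" by auto
    show "z \<in> cbox (sx * ox, sy * oy) (sx * mx, sy * my)"
      using G1[OF w(1)] unfolding w(2) mem_cbox2 using sxd syd
      by (cases "ox < mx"; cases "oy < my") (auto simp: min_def max_def refl_def split: if_splits)
  qed
  show "\<And>u z. u \<in> g ` W \<Longrightarrow> sx * ox \<le> fst z \<Longrightarrow> fst z \<le> fst u \<Longrightarrow> sy * oy \<le> snd z \<Longrightarrow> snd z \<le> snd u \<Longrightarrow> z \<in> g ` W"
  proof -
    fix u z assume a: "u \<in> g ` W" "sx * ox \<le> fst z" "fst z \<le> fst u" "sy * oy \<le> snd z" "snd z \<le> snd u"
    obtain v where v: "v \<in> W" "u = g v" using a(1) by auto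
    have "g z \<in> W"
      apply (rule G2[OF v(1)])
      using a(2-5) unfolding v(2) using sxd syd
      by (cases "ox < mx"; cases "oy < my"; auto simp: min_def max_def refl_def)+
    then show "z \<in> g ` W" using mem_img by blast
  qed
qed

end


context orient begin

lemma gpt: "g (a, b) = (sx * a, sy * b)" by (simp add: refl_def)

lemma blocked_Wit:
  assumes np: "p \<notin> interior W" and nq: "q \<notin> interior W"
    and blk: "\<forall>ps. shortest_rpath p q ps \<and> at_most_one_corner ps \<longrightarrow> rpath_set ps \<inter> interior W \<noteq> {}"
    and c: "c = (fst q, snd p) \<or> c = (fst p, snd q)"
  shows "S.Wit (Lset (g p) (g c) (g q))"
proof -
  have bl: "\<exists>z\<in>Lset p c' q. z \<in> interior W" if "c' = (fst q, snd p) \<or> c' = (fst p, snd q)" for c'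
    using blk canon[OF that] by blast
  have np': "\<not> (g p \<in> interior (g ` W))" using np int_img img_mem by auto
  have nq': "\<not> (g q \<in> interior (g ` W))" using nq int_img img_mem by auto
  have tr: "\<exists>z\<in>Lset (g p) (g c') (g q). z \<in> interior (g ` W)" if cc: "c' = (fst q, snd p) \<or> c' = (fst p, snd q)" for c'
  proof -
    obtain z where "z \<in> Lset p c' q" "z \<in> interior W" using bl[OF cc] by blast
    then have "g z \<in> Lset (g p) (g c') (g q)" "g z \<in> interior (g ` W)" using Lset_img int_img by auto
    then show ?thesis by blast
  qed
  have b1: "\<exists>z\<in>Lset (g p) (fst (g p), snd (g q)) (g q). z \<in> interior (g ` W)"
    using tr[of "(fst p, snd q)"] by (simp add: refl_def)
  have b2: "\<exists>z\<in>Lset (g p) (fst (g q), snd (g p)) (g q). z \<in> interior (g ` W)"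
    using tr[of "(fst q, snd p)"] by (simp add: refl_def)
  have gc: "g c = (fst (g q), snd (g p)) \<or> g c = (fst (g p), snd (g q))" using c by (auto simp: refl_def)
  show ?thesis using S.wit_all[of "g p" "g q" "g c"] np' nq' b1 b2 gc by blast
qed

lemma hits_cross:
  assumes np: "p \<notin> interior W" and nq: "q \<notin> interior W"
    and blk: "\<forall>ps. shortest_rpath p q ps \<and> at_most_one_corner ps \<longrightarrow> rpath_set ps \<inter> interior W \<noteq> {}"
    and s: "shortest_rpath p q ps" and c1: "at_most_one_corner ps"
  shows "rpath_set ps \<inter> (closed_segment (ox,oy) (ox,my) \<union> closed_segment (ox,oy) (mx,oy)) \<noteq> {}"
proof -
  obtain c where c: "c = (fst q, snd p) \<or> c = (fst p, snd q)" "Lset p c q \<subseteq> rpath_set ps"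
    using shortest_L[OF s c1] by blast
  have Wt: "S.Wit (Lset (g p) (g c) (g q))" using blocked_Wit[OF np nq blk c(1)] .
  obtain w where w: "w \<in> Lset (g p) (g c) (g q)"
     "w \<in> closed_segment (sx * ox, sy * oy) (sx * ox, sy * my) \<union> closed_segment (sx * ox, sy * oy) (sx * mx, sy * oy)"
    using S.cross_from_wit[OF Wt] by blast
  have "g w \<in> Lset p c q" using w(1) Lset_img mem_img by auto
  moreover have "g w \<in> closed_segment (ox,oy) (ox,my) \<union> closed_segment (ox,oy) (mx,oy)"
    using w(2) unfolding gpt[symmetric] seg_img mem_img[symmetric] by auto
  ultimately show ?thesis using c(2) by blast
qed

lemma hits_diag:
  assumes np: "p \<notin> interior W" and nq: "q \<notin> interior W"
    and blk: "\<forall>ps. shortest_rpath p q ps \<and> at_most_one_corner ps \<longrightarrow> rpath_set ps \<inter> interior W \<noteq> {}"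
    and s: "shortest_rpath p q ps" and c1: "at_most_one_corner ps"
    and d: "closed_segment (mx,oy) (ox,my) \<subseteq> W"
  shows "rpath_set ps \<inter> closed_segment (mx,oy) (ox,my) \<noteq> {}"
proof -
  obtain c where c: "c = (fst q, snd p) \<or> c = (fst p, snd q)" "Lset p c q \<subseteq> rpath_set ps"
    using shortest_L[OF s c1] by blast
  have Wt: "S.Wit (Lset (g p) (g c) (g q))" using blocked_Wit[OF np nq blk c(1)] .
  have d': "closed_segment (sx * mx, sy * oy) (sx * ox, sy * my) \<subseteq> g ` W"
    using d unfolding gpt[symmetric] seg_img by blast
  obtain w where w: "w \<in> Lset (g p) (g c) (g q)"
     "w \<in> closed_segment (sx * mx, sy * oy) (sx * ox, sy * my)"
    using S.diag_from_wit[OF S.H3[OF d'] Wt] by blast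
  have "g w \<in> Lset p c q" using w(1) Lset_img mem_img by auto
  moreover have "g w \<in> closed_segment (mx,oy) (ox,my)"
    using w(2) unfolding gpt[symmetric] seg_img mem_img[symmetric] by auto
  ultimately show ?thesis using c(2) by blast
qed

lemma line_h:
  assumes sk: "skeleton W SS" and y: "sy * oy < y'" "y' < sy * my"
  shows "\<exists>s\<in>SS. \<exists>w\<in>s. snd (g w) = y'"
proof -
  obtain w0 where w0: "w0 \<in> W" "snd w0 = my" "fst w0 \<noteq> ox" using G4a by blast
  have gx: "sx * ox < sx * fst w0" "sx * fst w0 \<le> sx * mx" using G1[OF w0(1)] w0(3) sxd
    by (cases "ox < mx"; auto simp: min_def max_def split: if_splits)+
  define z' where "z' = ((sx * ox + sx * fst w0)/2, y')"
  have gw0: "g w0 \<in> g ` W" using w0 by auto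
  have zi: "z' \<in> interior (g ` W)"
  proof (rule S.box_int[OF gw0])
    show "sx * ox < fst z'" unfolding z'_def fst_conv using gx by (simp add: field_simps)
    show "fst z' < fst (g w0)" unfolding z'_def fst_conv g_fst using gx by (simp add: field_simps)
    show "sy * oy < snd z'" unfolding z'_def snd_conv using y by linarith
    show "snd z' < snd (g w0)" unfolding z'_def snd_conv g_snd w0(2) using y by linarith
  qed
  define p where "p = g (sx * ox - 1, y')"
  define q where "q = g (sx * mx + 1, y')"
  have sp: "snd p = snd q" unfolding p_def q_def by simp
  have np: "p \<notin> interior W"
  proof
    assume "p \<in> interior W"
    then have "g p \<in> interior (g ` W)" using int_img by auto
    then show False using S.int_sub[of "g p"] unfolding p_def by simp
  qed
  have nq: "q \<notin> interior W"
  proof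
    assume "q \<in> interior W"
    then have "g q \<in> interior (g ` W)" using int_img by auto
    then show False using S.int_sub[of "g q"] unfolding q_def by simp
  qed
  have segpq: "closed_segment p q = g ` closed_segment (sx * ox - 1, y') (sx * mx + 1, y')"
    unfolding p_def q_def seg_img ..
  have i1: "sx * ox - 1 \<le> (sx * ox + sx * fst w0)/2" using gx by (simp add: field_simps)
  have i2: "(sx * ox + sx * fst w0)/2 \<le> sx * mx + 1" using gx by (simp add: field_simps)
  have mm: "min (sx * ox - 1) (sx * mx + 1) = sx * ox - 1" "max (sx * ox - 1) (sx * mx + 1) = sx * mx + 1"
    using S.ox by (intro min_absorb1 max_absorb2, linarith)+
  have "z' \<in> closed_segment (sx * ox - 1, y') (sx * mx + 1, y')"
    unfolding mm seg_h[of "(sx * ox - 1, y')" "(sx * mx + 1, y')" z', unfolded snd_conv, OF refl]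
    unfolding z'_def fst_conv snd_conv using i1 i2 S.ox by (intro conjI refl) linarith+
  then have zpq: "g z' \<in> closed_segment p q" unfolding segpq by auto
  have zW: "g z' \<in> interior W" using zi int_img mem_img by auto
  have blk: "\<forall>ps. shortest_rpath p q ps \<and> at_most_one_corner ps \<longrightarrow> rpath_set ps \<inter> interior W \<noteq> {}"
  proof (intro allI impI)
    fix ps assume a: "shortest_rpath p q ps \<and> at_most_one_corner ps"
    obtain c where c: "c = (fst q, snd p) \<or> c = (fst p, snd q)" "Lset p c q \<subseteq> rpath_set ps"
      using shortest_L a by blast
    have "c = q \<or> c = p" using c(1) sp by (auto simp: prod_eq_iff)
    then have "closed_segment p q \<subseteq> Lset p c q" unfolding Lset_def by auto
    then show "rpath_set ps \<inter> interior W \<noteq> {}" using c(2) zpq zW by blast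
  qed
  have cq: "q = (fst q, snd p)" using sp by simp
  have "\<exists>s\<in>SS. rpath_set [p,q,q] \<inter> s \<noteq> {}"
    using sk np nq blk canon(1,2)[of q q p] cq unfolding skeleton_def by metis
  then obtain s w where sw: "s \<in> SS" "w \<in> s" "w \<in> rpath_set [p,q,q]" by blast
  have "rpath_set [p,q,q] = closed_segment p q" using canon(3)[of q q p] cq unfolding Lset_def by auto
  then have "g w \<in> closed_segment (sx * ox - 1, y') (sx * mx + 1, y')" using sw(3) segpq mem_img by auto
  then have "snd (g w) = y'" using seg_h[of "(sx * ox - 1, y')" "(sx * mx + 1, y')" "g w"] by simp
  then show ?thesis using sw by blast
qed

lemma line_v:
  assumes sk: "skeleton W SS" and y: "sx * ox < x'" "x' < sx * mx"
  shows "\<exists>s\<in>SS. \<exists>w\<in>s. fst (g w) = x'"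
proof -
  obtain w0 where w0: "w0 \<in> W" "fst w0 = mx" "snd w0 \<noteq> oy" using G4b by blast
  have gy: "sy * oy < sy * snd w0" "sy * snd w0 \<le> sy * my" using G1[OF w0(1)] w0(3) syd
    by (cases "oy < my"; auto simp: min_def max_def split: if_splits)+
  define z' where "z' = (x', (sy * oy + sy * snd w0)/2)"
  have gw0: "g w0 \<in> g ` W" using w0 by auto
  have zi: "z' \<in> interior (g ` W)"
  proof (rule S.box_int[OF gw0])
    show "sy * oy < snd z'" unfolding z'_def snd_conv using gy by (simp add: field_simps)
    show "snd z' < snd (g w0)" unfolding z'_def snd_conv g_snd using gy by (simp add: field_simps)
    show "sx * ox < fst z'" unfolding z'_def fst_conv using y by linarith
    show "fst z' < fst (g w0)" unfolding z'_def fst_conv g_fst w0(2) using y by linarith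
  qed
  define p where "p = g (x', sy * oy - 1)"
  define q where "q = g (x', sy * my + 1)"
  have sp: "fst p = fst q" unfolding p_def q_def by simp
  have np: "p \<notin> interior W"
  proof
    assume "p \<in> interior W"
    then have "g p \<in> interior (g ` W)" using int_img by auto
    then show False using S.int_sub[of "g p"] unfolding p_def by simp
  qed
  have nq: "q \<notin> interior W"
  proof
    assume "q \<in> interior W"
    then have "g q \<in> interior (g ` W)" using int_img by auto
    then show False using S.int_sub[of "g q"] unfolding q_def by simp
  qed
  have segpq: "closed_segment p q = g ` closed_segment (x', sy * oy - 1) (x', sy * my + 1)"
    unfolding p_def q_def seg_img ..
  have i1: "sy * oy - 1 \<le> (sy * oy + sy * snd w0)/2" using gy by (simp add: field_simps)
  have i2: "(sy * oy + sy * snd w0)/2 \<le> sy * my + 1" using gy by (simp add: field_simps)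
  have mm: "min (sy * oy - 1) (sy * my + 1) = sy * oy - 1" "max (sy * oy - 1) (sy * my + 1) = sy * my + 1"
    using S.oy by (intro min_absorb1 max_absorb2, linarith)+
  have "z' \<in> closed_segment (x', sy * oy - 1) (x', sy * my + 1)"
    unfolding mm seg_v[of "(x', sy * oy - 1)" "(x', sy * my + 1)" z', unfolded fst_conv, OF refl]
    unfolding z'_def fst_conv snd_conv using i1 i2 S.oy by (intro conjI refl) linarith+
  then have zpq: "g z' \<in> closed_segment p q" unfolding segpq by auto
  have zW: "g z' \<in> interior W" using zi int_img mem_img by auto
  have blk: "\<forall>ps. shortest_rpath p q ps \<and> at_most_one_corner ps \<longrightarrow> rpath_set ps \<inter> interior W \<noteq> {}"
  proof (intro allI impI)
    fix ps assume a: "shortest_rpath p q ps \<and> at_most_one_corner ps"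
    obtain c where c: "c = (fst q, snd p) \<or> c = (fst p, snd q)" "Lset p c q \<subseteq> rpath_set ps"
      using shortest_L a by blast
    have "c = q \<or> c = p" using c(1) sp by (auto simp: prod_eq_iff)
    then have "closed_segment p q \<subseteq> Lset p c q" unfolding Lset_def by auto
    then show "rpath_set ps \<inter> interior W \<noteq> {}" using c(2) zpq zW by blast
  qed
  have cq: "q = (fst p, snd q)" using sp by simp
  have "\<exists>s\<in>SS. rpath_set [p,q,q] \<inter> s \<noteq> {}"
    using sk np nq blk canon(1,2)[of q q p] cq unfolding skeleton_def by metis
  then obtain s w where sw: "s \<in> SS" "w \<in> s" "w \<in> rpath_set [p,q,q]" by blast
  have "rpath_set [p,q,q] = closed_segment p q" using canon(3)[of q q p] cq unfolding Lset_def by auto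
  then have "g w \<in> closed_segment (x', sy * oy - 1) (x', sy * my + 1)" using sw(3) segpq mem_img by auto
  then have "fst (g w) = x'" using seg_v[of "(x', sy * oy - 1)" "(x', sy * my + 1)" "g w"] by simp
  then show ?thesis using sw by blast
qed

lemma empty_not: "\<not> skeleton W {}"
proof
  assume "skeleton W {}"
  moreover have "sy * oy < (sy * oy + sy * my)/2" using S.oy by (simp add: field_simps)
  moreover have "(sy * oy + sy * my)/2 < sy * my" using S.oy by (simp add: field_simps)
  ultimately show False using line_h by blast
qed

lemma single:
  assumes sk: "skeleton W {s}"
  shows "\<exists>a b. s = closed_segment a b \<and> a \<in> W \<and> b \<in> W \<and> fst a \<in> {ox,mx} \<and> fst b \<in> {ox,mx} \<and>
     snd a \<in> {oy,my} \<and> snd b \<in> {oy,my} \<and> fst a \<noteq> fst b \<and> snd a \<noteq> snd b"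
proof -
  obtain a b where ab: "s = closed_segment a b" using sk unfolding skeleton_def is_segment_def by auto
  have sW: "s \<subseteq> W" using sk unfolding skeleton_def by auto
  have sub: "closed_segment (g a) (g b) \<subseteq> cbox (sx * ox, sy * oy) (sx * mx, sy * my)"
    using sW S.sub unfolding ab seg_img by blast
  have hy: "\<exists>w\<in>closed_segment (g a) (g b). snd w = y" if yy: "sy * oy < y" "y < sy * my" for y
  proof -
    obtain w where "w \<in> s" "snd (g w) = y" using line_h[OF sk yy] by blast
    then show ?thesis unfolding ab seg_img by blast
  qed
  have hx: "\<exists>w\<in>closed_segment (g a) (g b). fst w = x" if xx: "sx * ox < x" "x < sx * mx" for x
  proof -
    obtain w where "w \<in> s" "fst (g w) = x" using line_v[OF sk xx] by blast
    then show ?thesis unfolding ab seg_img by blast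
  qed
  have sp: "(snd (g a) = sy * oy \<and> snd (g b) = sy * my \<or> snd (g a) = sy * my \<and> snd (g b) = sy * oy) \<and>
    (fst (g a) = sx * ox \<and> fst (g b) = sx * mx \<or> fst (g a) = sx * mx \<and> fst (g b) = sx * ox)"
    by (rule span_corners[OF sub S.ox S.oy hy hx])
  have nz: "sx \<noteq> 0" "sy \<noteq> 0" using sxd syd by auto
  have "(snd a = oy \<and> snd b = my \<or> snd a = my \<and> snd b = oy) \<and> (fst a = ox \<and> fst b = mx \<or> fst a = mx \<and> fst b = ox)"
    using sp nz by simp
  moreover have "a \<in> W" "b \<in> W" using sW ab by auto
  ultimately show ?thesis using ab neqx neqy by (intro exI[of _ a] exI[of _ b]) auto
qed

end


lemma collinear_snd: "snd a = snd b \<Longrightarrow> snd b = snd c \<Longrightarrow> collinear {a,b,c::pt}"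
  unfolding collinear_def
  by (rule exI[of _ "(1,0)"]) (auto intro!: exI[of _ "fst _ - fst _"] simp: prod_eq_iff)

lemma collinear_fst: "fst a = fst b \<Longrightarrow> fst b = fst c \<Longrightarrow> collinear {a,b,c::pt}"
  unfolding collinear_def
  by (rule exI[of _ "(0,1)"]) (auto intro!: exI[of _ "snd _ - snd _"] simp: prod_eq_iff)

lemma pk_eq:
  fixes k n :: nat
  assumes "k < n"
  shows "(k + n - 1) mod n = (if k = 0 then n - 1 else k - 1)"
proof (cases k)
  case 0 then show ?thesis using assms by simp
next
  case (Suc j)
  then have "k + n - 1 = j + n" by simp
  then show ?thesis using Suc assms by simp
qed

lemma pk_nxt:
  fixes k n :: nat
  assumes "k < n"
  shows "Suc ((k + n - 1) mod n) mod n = k"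
  using pk_eq[OF assms] assms by (cases k) auto

lemma obst_basic:
  assumes "obstacle vs"
  shows "length vs \<ge> 3" "distinct vs"
  using assms unfolding obstacle_def simple_polygon_def by auto

lemma vertex_struct:
  assumes ob: "obstacle vs" and rl: "rectilinear vs" and k: "k < length vs"
  shows "\<exists>ih iv wh wv. ih < length vs \<and> iv < length vs \<and> ih \<noteq> iv \<and>
     {ih, iv} = {k, (k + length vs - 1) mod length vs} \<and>
     edge_seg vs ih = closed_segment (vs!k) wh \<and> edge_seg vs iv = closed_segment (vs!k) wv \<and>
     snd wh = snd (vs!k) \<and> fst wh \<noteq> fst (vs!k) \<and> fst wv = fst (vs!k) \<and> snd wv \<noteq> snd (vs!k) \<and>
     wh \<in> set vs \<and> wv \<in> set vs \<and> horiz_edge vs ih \<and> vert_edge vs iv"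
proof -
  define n where "n = length vs"
  have n3: "n \<ge> 3" and dis: "distinct vs" using obst_basic[OF ob] unfolding n_def by auto
  define pk where "pk = (k + n - 1) mod n"
  define sk where "sk = Suc k mod n"
  have kn: "k < n" using k unfolding n_def .
  have pkn: "pk < n" "sk < n" unfolding pk_def sk_def using n3 by auto
  have nx: "nxt vs pk = vs!k" unfolding nxt_def pk_def n_def[symmetric] using pk_nxt[OF kn] by simp
  have nk: "nxt vs k = vs!sk" unfolding nxt_def sk_def n_def ..
  have idx: "pk \<noteq> k" "sk \<noteq> k" "pk \<noteq> sk" unfolding pk_def sk_def using n3 kn pk_eq[OF kn]
    by (auto simp: mod_Suc split: if_splits)
  have dd: "vs!pk \<noteq> vs!k" "vs!sk \<noteq> vs!k" "vs!pk \<noteq> vs!sk"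
    using idx pkn kn dis unfolding n_def by (auto simp: nth_eq_iff_index_eq)
  have gp: "\<not> collinear {vs!pk, vs!k, vs!sk}"
    using ob dd pkn kn unfolding obstacle_def general_position_def n_def by (auto simp: insert_commute)
  have r1: "fst (vs!pk) = fst (vs!k) \<or> snd (vs!pk) = snd (vs!k)"
    using rl pkn nx unfolding rectilinear_def n_def by metis
  have r2: "fst (vs!k) = fst (vs!sk) \<or> snd (vs!k) = snd (vs!sk)"
    using rl kn nk unfolding rectilinear_def n_def by metis
  have e1: "edge_seg vs pk = closed_segment (vs!k) (vs!pk)" unfolding edge_seg_def nx by (simp add: closed_segment_commute)
  have e2: "edge_seg vs k = closed_segment (vs!k) (vs!sk)" unfolding edge_seg_def nk ..
  have pks: "(k + length vs - 1) mod length vs = pk" unfolding pk_def n_def ..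
  show ?thesis
  proof (cases "snd (vs!pk) = snd (vs!k)")
    case True
    then have f2: "fst (vs!k) = fst (vs!sk)" "snd (vs!k) \<noteq> snd (vs!sk)"
      using r2 gp collinear_snd[of "vs!pk" "vs!k" "vs!sk"] dd by (auto simp: prod_eq_iff)
    have f1: "fst (vs!pk) \<noteq> fst (vs!k)" using True dd by (auto simp: prod_eq_iff)
    show ?thesis unfolding pks
      apply (rule exI[of _ pk], rule exI[of _ k], rule exI[of _ "vs!pk"], rule exI[of _ "vs!sk"])
      using pkn kn idx e1 e2 True f1 f2 nx nk unfolding n_def horiz_edge_def vert_edge_def by auto
  next
    case False
    then have f1: "fst (vs!pk) = fst (vs!k)" using r1 by auto
    then have f2: "snd (vs!k) = snd (vs!sk)" "fst (vs!k) \<noteq> fst (vs!sk)"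
      using r2 gp collinear_fst[of "vs!pk" "vs!k" "vs!sk"] dd by (auto simp: prod_eq_iff)
    show ?thesis unfolding pks
      apply (rule exI[of _ k], rule exI[of _ pk], rule exI[of _ "vs!sk"], rule exI[of _ "vs!pk"])
      using pkn kn idx e1 e2 False f1 f2 nx nk unfolding n_def horiz_edge_def vert_edge_def by auto
  qed
qed

lemma incid:
  assumes ob: "obstacle vs" and k: "k < length vs" and l: "l < length vs"
    and v: "vs!k \<in> {vs!l, nxt vs l}"
  shows "l = k \<or> l = (k + length vs - 1) mod length vs"
proof -
  define n where "n = length vs"
  have n3: "n \<ge> 3" and dis: "distinct vs" using obst_basic[OF ob] unfolding n_def by auto
  have kn: "k < n" "l < n" using k l unfolding n_def by auto
  show ?thesis
  proof (cases "vs!k = vs!l")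
    case True
    then show ?thesis using dis kn unfolding n_def by (auto simp: nth_eq_iff_index_eq)
  next
    case False
    then have "vs!k = vs!(Suc l mod n)" using v unfolding nxt_def n_def by auto
    moreover have "Suc l mod n < n" using n3 by simp
    ultimately have "k = Suc l mod n" using dis kn unfolding n_def by (auto simp: nth_eq_iff_index_eq)
    then show ?thesis using kn pk_eq[OF kn(1)] unfolding n_def[symmetric]
      by (auto simp: mod_Suc split: if_splits)
  qed
qed


lemma hseg_frontier:
  fixes a b :: pt
  assumes "snd a = snd b" "fst a \<noteq> fst b" "closed_segment a b \<subseteq> frontier (cbox (x0,y0) (x1,y1))"
  shows "snd a = y0 \<or> snd a = y1"
proof (rule ccontr)
  assume nt: "\<not> ?thesis"
  define m where "m = ((fst a + fst b)/2, snd a)"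
  have mab: "m \<in> closed_segment a b" using seg_h[of a b m] assms(1) unfolding m_def by (auto simp: min_def max_def)
  have key: "\<And>w. w \<in> closed_segment a b \<Longrightarrow> snd w = snd a \<Longrightarrow> fst w = x0 \<or> fst w = x1"
  proof -
    fix w assume w: "w \<in> closed_segment a b" "snd w = snd a"
    then have "w \<in> cbox (x0,y0) (x1,y1)" "w \<notin> box (x0,y0) (x1,y1)" using assms(3) frontier_cbox by auto
    then show "fst w = x0 \<or> fst w = x1" using w(2) nt mem_cbox2 mem_box2 by auto
  qed
  have "fst a = x0 \<or> fst a = x1" using key[of a] by auto
  moreover have "fst b = x0 \<or> fst b = x1" using key[of b] assms(1) by auto
  moreover have "fst m = x0 \<or> fst m = x1" using key[OF mab] unfolding m_def by auto
  ultimately show False using assms(2) unfolding m_def by auto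
qed

lemma vseg_frontier:
  fixes a b :: pt
  assumes "fst a = fst b" "snd a \<noteq> snd b" "closed_segment a b \<subseteq> frontier (cbox (x0,y0) (x1,y1))"
  shows "fst a = x0 \<or> fst a = x1"
proof (rule ccontr)
  assume nt: "\<not> ?thesis"
  define m where "m = (fst a, (snd a + snd b)/2)"
  have mab: "m \<in> closed_segment a b" using seg_v[of a b m] assms(1) unfolding m_def by (auto simp: min_def max_def)
  have key: "\<And>w. w \<in> closed_segment a b \<Longrightarrow> fst w = fst a \<Longrightarrow> snd w = y0 \<or> snd w = y1"
  proof -
    fix w assume w: "w \<in> closed_segment a b" "fst w = fst a"
    then have "w \<in> cbox (x0,y0) (x1,y1)" "w \<notin> box (x0,y0) (x1,y1)" using assms(3) frontier_cbox by auto
    then show "snd w = y0 \<or> snd w = y1" using w(2) nt mem_cbox2 mem_box2 by auto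
  qed
  have "snd a = y0 \<or> snd a = y1" using key[of a] by auto
  moreover have "snd b = y0 \<or> snd b = y1" using key[of b] assms(1) by auto
  moreover have "snd m = y0 \<or> snd m = y1" using key[OF mab] unfolding m_def by auto
  ultimately show False using assms(2) unfolding m_def by auto
qed

locale Lob =
  fixes vs :: "pt list"
  assumes L: "L_obstacle vs"
begin

abbreviation "W \<equiv> region vs"
definition "bx0 = Inf (fst ` W)"
definition "bx1 = Sup (fst ` W)"
definition "by0 = Inf (snd ` W)"
definition "by1 = Sup (snd ` W)"

lemma ob: "obstacle vs" and rl: "rectilinear vs" and rc: "rect_convex W"
  and card3: "card {v. extreme_corner vs v} = 3"
  using L unfolding L_obstacle_def by auto

lemma n3: "length vs \<ge> 3" and dis: "distinct vs" using obst_basic[OF ob] by auto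

lemma edge_W: "k < length vs \<Longrightarrow> edge_seg vs k \<subseteq> W"
  unfolding region_def poly_boundary_def by auto

lemma vert_W: "v \<in> set vs \<Longrightarrow> v \<in> W"
proof -
  assume "v \<in> set vs"
  then obtain k where "k < length vs" "v = vs!k" by (auto simp: in_set_conv_nth)
  then show "v \<in> W" using edge_W[of k] unfolding edge_seg_def by auto
qed

lemma pb_compact: "compact (poly_boundary vs)"
  unfolding poly_boundary_def edge_seg_def by (intro compact_UN) auto

lemma W_bounded: "bounded W"
proof -
  have b: "bounded (poly_boundary vs)" by (rule compact_imp_bounded[OF pb_compact])
  then have "bounded (inside (poly_boundary vs))" by (rule bounded_inside)
  then show ?thesis unfolding region_def using b by simp
qed

lemma W_ne: "W \<noteq> {}"
proof -
  have "0 < length vs" using n3 by linarith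
  then have "vs!0 \<in> set vs" by (rule nth_mem)
  then show ?thesis using vert_W by blast
qed

lemma W_sub: "W \<subseteq> cbox (bx0,by0) (bx1,by1)"
proof
  fix w assume w: "w \<in> W"
  have b1: "bdd_below (fst ` W)" "bdd_above (fst ` W)" "bdd_below (snd ` W)" "bdd_above (snd ` W)"
    using bounded_fst[OF W_bounded] bounded_snd[OF W_bounded] bounded_imp_bdd_below bounded_imp_bdd_above by auto
  have "Inf (fst ` W) \<le> fst w" by (rule cInf_lower) (use w b1 in auto)
  moreover have "fst w \<le> Sup (fst ` W)" by (rule cSup_upper) (use w b1 in auto)
  moreover have "Inf (snd ` W) \<le> snd w" by (rule cInf_lower) (use w b1 in auto)
  moreover have "snd w \<le> Sup (snd ` W)" by (rule cSup_upper) (use w b1 in auto)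
  ultimately show "w \<in> cbox (bx0,by0) (bx1,by1)" unfolding mem_cbox2 bx0_def bx1_def by0_def by1_def by auto
qed

lemma bbox_eq: "bbox W = cbox (bx0,by0) (bx1,by1)"
  unfolding bbox_def bx0_def bx1_def by0_def by1_def ..

lemma int_box: "interior W \<subseteq> box (bx0,by0) (bx1,by1)"
  using interior_mono[OF W_sub] by simp

lemma inside_int: "inside (poly_boundary vs) \<subseteq> interior W"
proof -
  have "open (inside (poly_boundary vs))" using pb_compact compact_imp_closed open_inside by blast
  moreover have "inside (poly_boundary vs) \<subseteq> W" unfolding region_def by auto
  ultimately show ?thesis using interior_maximal by blast
qed

lemma vstruct: "v \<in> set vs \<Longrightarrow> \<exists>k<length vs. v = vs!k" by (auto simp: in_set_conv_nth)

lemma A6: assumes "extreme_corner vs v" shows "(fst v = bx0 \<or> fst v = bx1) \<and> (snd v = by0 \<or> snd v = by1)"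
proof -
  obtain i j where ij: "i \<noteq> j" "extreme_edge vs i" "extreme_edge vs j" "v \<in> {vs!i, nxt vs i}" "v \<in> {vs!j, nxt vs j}"
    and vs: "v \<in> set vs"
    using assms unfolding extreme_corner_def by blast
  obtain k where k: "k < length vs" "v = vs!k" using vstruct[OF vs] by blast
  have il: "i < length vs" "j < length vs" using ij unfolding extreme_edge_def by auto
  have "i = k \<or> i = (k + length vs - 1) mod length vs" using incid[OF ob k(1) il(1)] ij(4) k(2) by auto
  moreover have "j = k \<or> j = (k + length vs - 1) mod length vs" using incid[OF ob k(1) il(2)] ij(5) k(2) by auto
  ultimately have ijs: "{i, j} = {k, (k + length vs - 1) mod length vs}" using ij(1) by auto
  obtain ih iv wh wv where S: "{ih, iv} = {k, (k + length vs - 1) mod length vs}"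
     "edge_seg vs ih = closed_segment (vs!k) wh" "edge_seg vs iv = closed_segment (vs!k) wv"
     "snd wh = snd (vs!k)" "fst wh \<noteq> fst (vs!k)" "fst wv = fst (vs!k)" "snd wv \<noteq> snd (vs!k)"
    using vertex_struct[OF ob rl k(1)] by blast
  have "ih \<in> {i,j}" "iv \<in> {i,j}" using S(1) ijs by auto
  then have ex: "extreme_edge vs ih" "extreme_edge vs iv" using ij by auto
  have fr: "closed_segment (vs!k) wh \<subseteq> frontier (cbox (bx0,by0) (bx1,by1))"
    "closed_segment (vs!k) wv \<subseteq> frontier (cbox (bx0,by0) (bx1,by1))"
    using ex S(2,3) unfolding extreme_edge_def bbox_eq by auto
  have "snd v = by0 \<or> snd v = by1" using hseg_frontier[OF _ _ fr(1)] S(4,5) k(2) by auto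
  moreover have "fst v = bx0 \<or> fst v = bx1" using vseg_frontier[OF _ _ fr(2)] S(6,7) k(2) by auto
  ultimately show ?thesis by auto
qed

lemma side_frontier:
  assumes "closed_segment a b \<subseteq> W" "\<forall>w\<in>closed_segment a b. fst w = bx0 \<or> fst w = bx1 \<or> snd w = by0 \<or> snd w = by1"
  shows "closed_segment a b \<subseteq> frontier (cbox (bx0,by0) (bx1,by1))"
proof
  fix w assume w: "w \<in> closed_segment a b"
  then have "w \<in> cbox (bx0,by0) (bx1,by1)" using assms(1) W_sub by blast
  moreover have "fst w = bx0 \<or> fst w = bx1 \<or> snd w = by0 \<or> snd w = by1" using assms(2) w by blast
  then have "w \<notin> box (bx0,by0) (bx1,by1)" unfolding mem_box2 by auto
  ultimately show "w \<in> frontier (cbox (bx0,by0) (bx1,by1))" using frontier_cbox by blast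
qed

lemma vertex_edges:
  assumes vs: "v \<in> set vs" and cx: "fst v = bx0 \<or> fst v = bx1" and cy: "snd v = by0 \<or> snd v = by1"
  shows "\<exists>ih iv wh wv. extreme_edge vs ih \<and> extreme_edge vs iv \<and> ih \<noteq> iv \<and>
     edge_seg vs ih = closed_segment v wh \<and> edge_seg vs iv = closed_segment v wv \<and>
     snd wh = snd v \<and> fst wh \<noteq> fst v \<and> fst wv = fst v \<and> snd wv \<noteq> snd v \<and>
     wh \<in> set vs \<and> wv \<in> set vs \<and> horiz_edge vs ih \<and> vert_edge vs iv \<and>
     v \<in> {vs!ih, nxt vs ih} \<and> v \<in> {vs!iv, nxt vs iv}"
proof -
  obtain k where k: "k < length vs" "v = vs!k" using vstruct[OF vs] by blast
  obtain ih iv wh wv where S: "ih < length vs" "iv < length vs" "ih \<noteq> iv" "{ih, iv} = {k, (k + length vs - 1) mod length vs}"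
     "edge_seg vs ih = closed_segment (vs!k) wh" "edge_seg vs iv = closed_segment (vs!k) wv"
     "snd wh = snd (vs!k)" "fst wh \<noteq> fst (vs!k)" "fst wv = fst (vs!k)" "snd wv \<noteq> snd (vs!k)"
     "wh \<in> set vs" "wv \<in> set vs" "horiz_edge vs ih" "vert_edge vs iv"
    using vertex_struct[OF ob rl k(1)] by blast
  have inc: "vs!k \<in> {vs!l, nxt vs l}" if "l \<in> {k, (k + length vs - 1) mod length vs}" for l
    using that pk_nxt[OF k(1)] unfolding nxt_def by auto
  have e1: "extreme_edge vs ih" unfolding extreme_edge_def
  proof
    show "ih < length vs" by (rule S(1))
    have "\<forall>w\<in>closed_segment (vs!k) wh. snd w = by0 \<or> snd w = by1"
      using seg_h[of "vs!k" wh] S(7) cy k(2) by auto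
    then show "edge_seg vs ih \<subseteq> frontier (bbox W)" unfolding bbox_eq S(5)
      using side_frontier[of "vs!k" wh] edge_W[OF S(1)] S(5) by auto
  qed
  have e2: "extreme_edge vs iv" unfolding extreme_edge_def
  proof
    show "iv < length vs" by (rule S(2))
    have "\<forall>w\<in>closed_segment (vs!k) wv. fst w = bx0 \<or> fst w = bx1"
      using seg_v[of "vs!k" wv] S(9) cx k(2) by auto
    then show "edge_seg vs iv \<subseteq> frontier (bbox W)" unfolding bbox_eq S(6)
      using side_frontier[of "vs!k" wv] edge_W[OF S(2)] S(6) by auto
  qed
  have m: "ih \<in> {k, (k + length vs - 1) mod length vs}" "iv \<in> {k, (k + length vs - 1) mod length vs}"
    using S(4) by blast+
  have i1: "v \<in> {vs!ih, nxt vs ih}" using inc[OF m(1)] k(2) by simp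
  have i2: "v \<in> {vs!iv, nxt vs iv}" using inc[OF m(2)] k(2) by simp
  have s1: "edge_seg vs ih = closed_segment v wh" "edge_seg vs iv = closed_segment v wv"
    using S(5,6) k(2) by simp_all
  have s2: "snd wh = snd v" "fst wh \<noteq> fst v" "fst wv = fst v" "snd wv \<noteq> snd v"
    using S(7-10) k(2) by simp_all
  show ?thesis
    apply (rule exI[of _ ih], rule exI[of _ iv], rule exI[of _ wh], rule exI[of _ wv])
    using e1 e2 S(3) S(11-14) i1 i2 s1 s2 by blast
qed

lemma A7:
  assumes vW: "v \<in> W" and cx: "fst v = bx0 \<or> fst v = bx1" and cy: "snd v = by0 \<or> snd v = by1"
  shows "extreme_corner vs v"
proof -
  have "v \<notin> box (bx0,by0) (bx1,by1)" using cx cy mem_box2 by auto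
  then have "v \<notin> inside (poly_boundary vs)" using inside_int int_box by blast
  then have "v \<in> poly_boundary vs" using vW unfolding region_def by auto
  then obtain k where k: "k < length vs" "v \<in> edge_seg vs k" unfolding poly_boundary_def by auto
  define a b where "a = vs!k" "b = nxt vs k"
  have ab: "a \<in> W" "b \<in> W" using edge_W[OF k(1)] unfolding a_b_def edge_seg_def by auto
  have abc: "a \<in> cbox (bx0,by0) (bx1,by1)" "b \<in> cbox (bx0,by0) (bx1,by1)" using ab W_sub by auto
  have vab: "v \<in> closed_segment a b" using k(2) unfolding edge_seg_def a_b_def .
  have "fst a = fst b \<or> snd a = snd b" using rl k(1) unfolding rectilinear_def a_b_def by auto
  then have "v = a \<or> v = b"
  proof
    assume e: "fst a = fst b"
    then have f: "fst v = fst a" "min (snd a) (snd b) \<le> snd v" "snd v \<le> max (snd a) (snd b)" using seg_v[of a b v] vab by auto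
    have bnd: "by0 \<le> snd a" "snd a \<le> by1" "by0 \<le> snd b" "snd b \<le> by1" using abc unfolding mem_cbox2 by auto
    have "snd v = snd a \<or> snd v = snd b" using cy bnd f(2,3) unfolding min_def max_def by (auto split: if_splits)
    then show ?thesis using f(1) e by (auto simp: prod_eq_iff)
  next
    assume e: "snd a = snd b"
    then have f: "snd v = snd a" "min (fst a) (fst b) \<le> fst v" "fst v \<le> max (fst a) (fst b)" using seg_h[of a b v] vab by auto
    have bnd: "bx0 \<le> fst a" "fst a \<le> bx1" "bx0 \<le> fst b" "fst b \<le> bx1" using abc unfolding mem_cbox2 by auto
    have "fst v = fst a \<or> fst v = fst b" using cx bnd f(2,3) unfolding min_def max_def by (auto split: if_splits)
    then show ?thesis using f(1) e by (auto simp: prod_eq_iff)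
  qed
  moreover have "a \<in> set vs" "b \<in> set vs"
  proof -
    have "Suc k mod length vs < length vs" using n3 by (intro mod_less_divisor) linarith
    then show "a \<in> set vs" "b \<in> set vs" unfolding a_b_def nxt_def using k(1) by (auto intro: nth_mem)
  qed
  ultimately have vs: "v \<in> set vs" by auto
  obtain ih iv wh wv where E: "extreme_edge vs ih" "extreme_edge vs iv" "ih \<noteq> iv"
    "v \<in> {vs!ih, nxt vs ih}" "v \<in> {vs!iv, nxt vs iv}"
    using vertex_edges[OF vs cx cy] by blast
  show ?thesis unfolding extreme_corner_def using vs E by blast
qed

end


context Lob begin

definition "Cs = {(bx0,by0),(bx0,by1),(bx1,by0),(bx1,by1)}"

lemma E_eq: "{v. extreme_corner vs v} = Cs \<inter> W"
proof
  show "{v. extreme_corner vs v} \<subseteq> Cs \<inter> W"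
  proof
    fix v assume "v \<in> {v. extreme_corner vs v}"
    then have e: "extreme_corner vs v" by simp
    then have "v \<in> W" using vert_W unfolding extreme_corner_def by blast
    moreover have "v \<in> Cs" using A6[OF e] unfolding Cs_def by (cases v) auto
    ultimately show "v \<in> Cs \<inter> W" by blast
  qed
  show "Cs \<inter> W \<subseteq> {v. extreme_corner vs v}"
  proof
    fix v assume v: "v \<in> Cs \<inter> W"
    then have "(fst v = bx0 \<or> fst v = bx1) \<and> (snd v = by0 \<or> snd v = by1)" unfolding Cs_def by auto
    then show "v \<in> {v. extreme_corner vs v}" using A7 v by auto
  qed
qed

lemma le_b: "bx0 \<le> bx1" "by0 \<le> by1"
proof -
  obtain w where "w \<in> W" using W_ne by blast
  then have "w \<in> cbox (bx0,by0) (bx1,by1)" using W_sub by blast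
  then show "bx0 \<le> bx1" "by0 \<le> by1" unfolding mem_cbox2 by linarith+
qed

lemma strict_b: "bx0 < bx1" "by0 < by1"
proof -
  have c3: "card (Cs \<inter> W) = 3" using card3 E_eq by simp
  have "card (Cs \<inter> W) \<le> card Cs" by (rule card_mono) (auto simp: Cs_def)
  show "bx0 < bx1"
  proof (rule ccontr)
    assume "\<not> bx0 < bx1"
    then have "bx0 = bx1" using le_b by simp
    then have "Cs = {(bx0,by0),(bx0,by1)}" unfolding Cs_def by auto
    then have "card Cs \<le> 2" by (simp add: card_insert_if)
    then show False using c3 \<open>card (Cs \<inter> W) \<le> card Cs\<close> by simp
  qed
  show "by0 < by1"
  proof (rule ccontr)
    assume "\<not> by0 < by1"
    then have "by0 = by1" using le_b by simp
    then have "Cs = {(bx0,by0),(bx1,by0)}" unfolding Cs_def by auto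
    then have "card Cs \<le> 2" by (simp add: card_insert_if)
    then show False using c3 \<open>card (Cs \<inter> W) \<le> card Cs\<close> by simp
  qed
qed

lemma card_Cs: "card Cs = 4"
  unfolding Cs_def using strict_b by (simp add: card_insert_if)

lemma exM: "\<exists>M. M \<in> Cs \<and> M \<notin> W \<and> (\<forall>c\<in>Cs. c \<noteq> M \<longrightarrow> c \<in> W)"
proof -
  have fC: "finite Cs" unfolding Cs_def by simp
  have "card (Cs - Cs \<inter> W) = card Cs - card (Cs \<inter> W)" using fC by (intro card_Diff_subset) auto
  also have "\<dots> = 1" using card_Cs card3 E_eq by simp
  finally obtain M where M: "Cs - Cs \<inter> W = {M}" by (rule card_1_singletonE)
  then show ?thesis by (intro exI[of _ M]) blast
qed

definition "M = (SOME M. M \<in> Cs \<and> M \<notin> W \<and> (\<forall>c\<in>Cs. c \<noteq> M \<longrightarrow> c \<in> W))"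

lemma M_prop: "M \<in> Cs" "M \<notin> W" "\<And>c. c \<in> Cs \<Longrightarrow> c \<noteq> M \<Longrightarrow> c \<in> W"
  using someI_ex[OF exM] unfolding M_def[symmetric] by auto

definition "mx = fst M"
definition "my = snd M"
definition "ox = bx0 + bx1 - mx"
definition "oy = by0 + by1 - my"
definition "sx = (if ox < mx then 1 else -1::real)"
definition "sy = (if oy < my then 1 else -1::real)"

lemma M_eq: "M = (mx, my)" unfolding mx_def my_def by simp

lemma coords: "(ox = bx0 \<and> mx = bx1) \<or> (ox = bx1 \<and> mx = bx0)" "(oy = by0 \<and> my = by1) \<or> (oy = by1 \<and> my = by0)"
  using M_prop(1) unfolding Cs_def ox_def oy_def mx_def my_def by auto

lemma neqs: "ox \<noteq> mx" "oy \<noteq> my" using coords strict_b by auto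

lemma minmax: "min ox mx = bx0" "max ox mx = bx1" "min oy my = by0" "max oy my = by1"
  using coords strict_b by auto

lemma inCs: "x \<in> {ox, mx} \<Longrightarrow> y \<in> {oy, my} \<Longrightarrow> (x, y) \<in> Cs"
  using coords unfolding Cs_def by auto

lemma cornersW: "(ox,oy) \<in> W" "(ox,my) \<in> W" "(mx,oy) \<in> W"
  using M_prop(3)[OF inCs] M_eq neqs by auto

lemma G1': "w \<in> W \<Longrightarrow> min ox mx \<le> fst w \<and> fst w \<le> max ox mx \<and> min oy my \<le> snd w \<and> snd w \<le> max oy my"
  unfolding minmax using W_sub mem_cbox2 by blast

lemma G2':
  assumes u: "u \<in> W" and z: "min ox (fst u) \<le> fst z" "fst z \<le> max ox (fst u)"
    "min oy (snd u) \<le> snd z" "snd z \<le> max oy (snd u)"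
  shows "z \<in> W"
proof -
  have gu: "min ox mx \<le> fst u" "fst u \<le> max ox mx" "min oy my \<le> snd u" "snd u \<le> max oy my" using G1'[OF u] by auto
  have s1: "closed_segment (ox,oy) (ox,my) \<subseteq> W" using rc_v[OF rc cornersW(1,2)] by simp
  have s2: "closed_segment (ox,oy) (mx,oy) \<subseteq> W" using rc_h[OF rc cornersW(1,3)] by simp
  define P1 where "P1 = (ox, snd u)"
  have "P1 \<in> closed_segment (ox,oy) (ox,my)" unfolding P1_def using seg_v[of "(ox,oy)" "(ox,my)" "(ox, snd u)"] gu by auto
  then have P1W: "P1 \<in> W" using s1 by blast
  define P2 where "P2 = (fst z, snd u)"
  have "P2 \<in> closed_segment P1 u" unfolding P2_def P1_def using seg_h[of "(ox, snd u)" u "(fst z, snd u)"] z by auto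
  then have P2W: "P2 \<in> W" using rc_h[OF rc P1W u] unfolding P1_def by auto
  define P3 where "P3 = (fst z, oy)"
  have "P3 \<in> closed_segment (ox,oy) (mx,oy)" unfolding P3_def
    using seg_h[of "(ox,oy)" "(mx,oy)" "(fst z, oy)"] z gu by (auto simp: min_def max_def split: if_splits)
  then have P3W: "P3 \<in> W" using s2 by blast
  have "z \<in> closed_segment P3 P2" unfolding P3_def P2_def using seg_v[of "(fst z, oy)" "(fst z, snd u)" z] z by auto
  then show ?thesis using rc_v[OF rc P3W P2W] unfolding P3_def P2_def by auto
qed

lemma corner_ext: "x \<in> {ox, mx} \<Longrightarrow> y \<in> {oy, my} \<Longrightarrow> (x,y) \<in> W \<Longrightarrow> extreme_corner vs (x,y)"
  using A7 coords by auto

lemma G4a': "\<exists>w\<in>W. snd w = my \<and> fst w \<noteq> ox"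
proof -
  have e: "extreme_corner vs (ox,my)" using corner_ext cornersW by auto
  then have vs: "(ox,my) \<in> set vs" unfolding extreme_corner_def by auto
  obtain wh where "wh \<in> set vs" "snd wh = my" "fst wh \<noteq> ox"
    using vertex_edges[OF vs] coords by fastforce
  then show ?thesis using vert_W by blast
qed

lemma G4b': "\<exists>w\<in>W. fst w = mx \<and> snd w \<noteq> oy"
proof -
  have e: "extreme_corner vs (mx,oy)" using corner_ext cornersW by auto
  then have vs: "(mx,oy) \<in> set vs" unfolding extreme_corner_def by auto
  obtain wv where "wv \<in> set vs" "fst wv = mx" "snd wv \<noteq> oy"
    using vertex_edges[OF vs] coords by fastforce
  then show ?thesis using vert_W by blast
qed

sublocale Or: orient W ox oy mx my sx sy
  by (unfold_locales) (use neqs sx_def sy_def G1' G2' G4a' G4b' in auto)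

end


context Lob begin

lemma diag_case:
  assumes "diagonal vs d"
  shows "min_skeleton W {d}"
proof -
  obtain a b where ab: "extreme_corner vs a" "extreme_corner vs b" "fst a \<noteq> fst b" "snd a \<noteq> snd b"
    "d = closed_segment a b" "d \<subseteq> W"
    using assms unfolding diagonal_def by blast
  have aC: "a \<in> Cs" "b \<in> Cs" "a \<in> W" "b \<in> W" using ab(1,2) E_eq by auto
  have nM: "a \<noteq> (mx,my)" "b \<noteq> (mx,my)" using aC(3,4) M_prop(2) M_eq by auto
  have ca: "fst a \<in> {ox,mx}" "snd a \<in> {oy,my}" "fst b \<in> {ox,mx}" "snd b \<in> {oy,my}"
    using aC(1,2) coords unfolding Cs_def by auto
  have "(a = (ox,my) \<and> b = (mx,oy)) \<or> (a = (mx,oy) \<and> b = (ox,my))"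
    using ca nM ab(3,4) by (auto simp: prod_eq_iff)
  then have dd: "d = closed_segment (mx,oy) (ox,my)" using ab(5) by (auto simp: closed_segment_commute)
  have dW: "closed_segment (mx,oy) (ox,my) \<subseteq> W" using ab(6) dd by simp
  have sk: "skeleton W {d}"
    unfolding skeleton_def
  proof (intro conjI allI impI)
    have "a \<noteq> b" using ab(3) by auto
    then have "is_segment d" unfolding is_segment_def using ab(5) by blast
    then show "\<forall>s\<in>{d}. is_segment s" by simp
    show "\<Union> {d} \<subseteq> W" using ab(6) by simp
    fix p q ps
    assume h: "p \<notin> interior W \<and> q \<notin> interior W \<and>
       (\<forall>ps. shortest_rpath p q ps \<and> at_most_one_corner ps \<longrightarrow> rpath_set ps \<inter> interior W \<noteq> {})"
      and s: "shortest_rpath p q ps \<and> at_most_one_corner ps"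
    show "\<exists>s\<in>{d}. rpath_set ps \<inter> s \<noteq> {}"
      using Or.hits_diag[of p q ps] h s dW dd by auto
  qed
  show ?thesis unfolding min_skeleton_def
  proof (intro conjI allI impI)
    show "finite {d}" by simp
    show "skeleton W {d}" by (rule sk)
    fix S' assume "finite S' \<and> skeleton W S'"
    then have "S' \<noteq> {}" "finite S'" using Or.empty_not by auto
    then show "card {d} \<le> card S'" by (simp add: Suc_leI card_gt_0_iff)
  qed
qed

lemma nodiag_case:
  assumes nd: "\<nexists>d. diagonal vs d"
  shows "\<exists>S. cross vs S \<and> min_skeleton W S"
proof -
  define Po Pa Pc where "Po = (ox,oy)" "Pa = (ox,my)" "Pc = (mx,oy)"
  define sH sV where "sH = closed_segment Po Pa" "sV = closed_segment Po Pc"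
  have OW: "Po \<in> W" "Pa \<in> W" "Pc \<in> W" using cornersW unfolding Po_Pa_Pc_def by auto
  have ext: "extreme_corner vs Po" "extreme_corner vs Pa" "extreme_corner vs Pc"
    using corner_ext OW unfolding Po_Pa_Pc_def by auto
  have inv: "Po \<in> set vs" "Pa \<in> set vs" "Pc \<in> set vs" using ext unfolding extreme_corner_def by auto
  have cc: "fst Po = bx0 \<or> fst Po = bx1" "snd Po = by0 \<or> snd Po = by1"
     "fst Pa = bx0 \<or> fst Pa = bx1" "snd Pa = by0 \<or> snd Pa = by1"
     "fst Pc = bx0 \<or> fst Pc = bx1" "snd Pc = by0 \<or> snd Pc = by1"
    using coords unfolding Po_Pa_Pc_def by auto
  obtain ihO ivO whO wvO where EO: "extreme_edge vs ihO" "extreme_edge vs ivO"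
    "edge_seg vs ihO = closed_segment Po whO" "edge_seg vs ivO = closed_segment Po wvO"
    "snd whO = snd Po" "fst wvO = fst Po" "horiz_edge vs ihO" "vert_edge vs ivO"
    using vertex_edges[OF inv(1) cc(1,2)] by blast
  obtain ihA whA where EA: "extreme_edge vs ihA" "edge_seg vs ihA = closed_segment Pa whA" "horiz_edge vs ihA"
    using vertex_edges[OF inv(2) cc(3,4)] by blast
  obtain ivC wvC where EC: "extreme_edge vs ivC" "edge_seg vs ivC = closed_segment Pc wvC" "vert_edge vs ivC"
    using vertex_edges[OF inv(3) cc(5,6)] by blast
  have d1: "ihO \<noteq> ihA"
  proof
    assume "ihO = ihA"
    then have "Pa \<in> closed_segment Po whO" using EO(3) EA(2) by auto
    then have "snd Pa = snd Po" using seg_h[of Po whO Pa] EO(5) by auto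
    then show False using neqs unfolding Po_Pa_Pc_def by simp
  qed
  have d2: "ivO \<noteq> ivC"
  proof
    assume "ivO = ivC"
    then have "Pc \<in> closed_segment Po wvO" using EO(4) EC(2) by auto
    then have "fst Pc = fst Po" using seg_v[of Po wvO Pc] EO(6) by auto
    then show False using neqs unfolding Po_Pa_Pc_def by simp
  qed
  have sHW: "sH \<subseteq> W" unfolding sH_sV_def using rc_v[OF rc OW(1,2)] unfolding Po_Pa_Pc_def by simp
  have sVW: "sV \<subseteq> W" unfolding sH_sV_def using rc_h[OF rc OW(1,3)] unfolding Po_Pa_Pc_def by simp
  have segs: "is_segment sH" "is_segment sV" unfolding is_segment_def sH_sV_def Po_Pa_Pc_def using neqs by auto
  have cr: "cross vs {sH, sV}" unfolding cross_def
    apply (rule exI[of _ sH], rule exI[of _ sV])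
    apply (intro conjI refl segs sHW sVW)
     apply (rule exI[of _ ihO], rule exI[of _ ihA], rule exI[of _ Po], rule exI[of _ Pa])
     apply (use d1 EO EA sH_sV_def in auto)[1]
    apply (rule exI[of _ ivO], rule exI[of _ ivC], rule exI[of _ Po], rule exI[of _ Pc])
    apply (use d2 EO EC sH_sV_def in auto)[1]
    done
  have Cn: "Pc \<notin> sH" unfolding sH_sV_def using seg_v[of Po Pa Pc] neqs unfolding Po_Pa_Pc_def by auto
  have "Pc \<in> sV" unfolding sH_sV_def by simp
  then have ne: "sH \<noteq> sV" using Cn by auto
  have card2: "card {sH, sV} = 2" using ne by simp
  have sk: "skeleton W {sH, sV}"
    unfolding skeleton_def
  proof (intro conjI allI impI)
    show "\<forall>s\<in>{sH, sV}. is_segment s" using segs by auto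
    show "\<Union> {sH, sV} \<subseteq> W" using sHW sVW by simp
    fix p q ps
    assume h: "p \<notin> interior W \<and> q \<notin> interior W \<and>
       (\<forall>ps. shortest_rpath p q ps \<and> at_most_one_corner ps \<longrightarrow> rpath_set ps \<inter> interior W \<noteq> {})"
      and s: "shortest_rpath p q ps \<and> at_most_one_corner ps"
    have "rpath_set ps \<inter> (sH \<union> sV) \<noteq> {}"
      using Or.hits_cross[of p q ps] h s unfolding sH_sV_def Po_Pa_Pc_def by auto
    then show "\<exists>s\<in>{sH, sV}. rpath_set ps \<inter> s \<noteq> {}" by auto
  qed
  have mn: "min_skeleton W {sH, sV}" unfolding min_skeleton_def
  proof (intro conjI allI impI)
    show "finite {sH, sV}" by simp
    show "skeleton W {sH, sV}" by (rule sk)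
    fix S' assume a: "finite S' \<and> skeleton W S'"
    show "card {sH, sV} \<le> card S'"
    proof (rule ccontr)
      assume "\<not> ?thesis"
      then have "card S' < 2" using card2 by simp
      then have "card S' = 0 \<or> card S' = 1" by auto
      then show False
      proof
        assume "card S' = 0"
        then have "S' = {}" using a by simp
        then show False using a Or.empty_not by simp
      next
        assume "card S' = 1"
        then obtain s where s: "S' = {s}" by (rule card_1_singletonE)
        then have sk1: "skeleton W {s}" using a by simp
        obtain a b where ab: "s = closed_segment a b" "a \<in> W" "b \<in> W" "fst a \<in> {ox,mx}" "fst b \<in> {ox,mx}"
          "snd a \<in> {oy,my}" "snd b \<in> {oy,my}" "fst a \<noteq> fst b" "snd a \<noteq> snd b"
          using Or.single[OF sk1] by blast
        have "extreme_corner vs a" "extreme_corner vs b"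
          using corner_ext[of "fst a" "snd a"] corner_ext[of "fst b" "snd b"] ab by auto
        moreover have "s \<subseteq> W" using sk1 unfolding skeleton_def by auto
        ultimately have "diagonal vs s" unfolding diagonal_def using ab by blast
        then show False using nd by blast
      qed
    qed
  qed
  show ?thesis using cr mn by blast
qed

lemma main: "(\<forall>d. diagonal vs d \<longrightarrow> min_skeleton (region vs) {d}) \<and>
         ((\<nexists>d. diagonal vs d) \<longrightarrow> (\<exists>S. cross vs S \<and> min_skeleton (region vs) S))"
  using diag_case nodiag_case by blast

end

theorem lemma7:
  fixes vs :: "(real \<times> real) list"
  assumes "L_obstacle vs"
  shows "(\<forall>d. diagonal vs d \<longrightarrow> min_skeleton (region vs) {d}) \<and>
         ((\<nexists>d. diagonal vs d) \<longrightarrow> (\<exists>S. cross vs S \<and> min_skeleton (region vs) S))"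
proof -
  interpret Lob vs by unfold_locales (rule assms)
  show ?thesis by (rule main)
qed


end
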